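(* Let $A,B$ be real symmetric $4\times 4$ matrices defining quadrics $\mathcal A: X^TAX=0$, $\mathcal B: X^TBX=0$ in $\mathbb{PR}^3$ with $f(\lambda)=\det(\lambda A-B)$ not identically zero. If $f(\lambda)=0$ has two identical pairs of complex conjugate roots with Segre characteristic $[22]$, then the index sequence is $\langle 2\rangle$ and the QSIC comprises a real line and a space cubic curve that do not intersect at any real point.
   Context: $X=(x,y,z,w)^T$ homogeneous coordinates; QSIC $=\mathcal A\cap\mathcal B$. One may take $A$ nonsingular (changing basis of the pencil). Segre characteristic $[22]$: $A^{-1}B$ has two distinct eigenvalues (here a complex conjugate pair, each a double root of $f$), each with a single $2\times2$ Jordan block. $\mathrm{Id}(\lambda)$ = number of positive eigenvalues of $\lambda A-B$; when $f$ has no real roots, the index sequence is $\langle s_0\rangle$ with $s_0$ the constant value of $\mathrm{Id}$ on $\mathbb R$. *)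

theory Defs
  imports "Jordan_Normal_Form.Jordan_Normal_Form"
begin

definition pencil_poly :: "real mat \<Rightarrow> real mat \<Rightarrow> real poly" where
  "pencil_poly A B = det (mat (dim_row A) (dim_col A) (\<lambda>(i,j). [: - B $$ (i,j), A $$ (i,j) :]))"

definition num_pos_eig :: "real mat \<Rightarrow> nat" where
  "num_pos_eig M = (\<Sum>r\<in>{r. r > 0 \<and> poly (char_poly M) r = 0}. order r (char_poly M))"

definition Id_idx :: "real mat \<Rightarrow> real mat \<Rightarrow> real \<Rightarrow> nat" where
  "Id_idx A B l = num_pos_eig (l \<cdot>\<^sub>m A - B)"

abbreviation cmat :: "real mat \<Rightarrow> complex mat" where
  "cmat M \<equiv> map_mat complex_of_real M"

abbreviation cvec :: "real vec \<Rightarrow> complex vec" where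
  "cvec v \<equiv> map_vec complex_of_real v"

(* Complex points of the QSIC, as nonzero vectors of C^4 (homogeneous coordinates;
   the set is closed under nonzero scaling) *)
definition qsic :: "real mat \<Rightarrow> real mat \<Rightarrow> complex vec set" where
  "qsic A B = {X. X \<in> carrier_vec 4 \<and> X \<noteq> 0\<^sub>v 4 \<and>
      X \<bullet> (cmat A *\<^sub>v X) = 0 \<and> X \<bullet> (cmat B *\<^sub>v X) = 0}"

definition proj_line :: "real vec \<Rightarrow> real vec \<Rightarrow> complex vec set" where
  "proj_line P Q = {s \<cdot>\<^sub>v cvec P + t \<cdot>\<^sub>v cvec Q | s t. (s, t) \<noteq> (0, 0)}"

definition real_line :: "complex vec set \<Rightarrow> bool" where
  "real_line L \<longleftrightarrow> (\<exists>P Q. P \<in> carrier_vec 4 \<and> Q \<in> carrier_vec 4 \<and>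
      (\<forall>a b. a \<cdot>\<^sub>v P + b \<cdot>\<^sub>v Q = 0\<^sub>v 4 \<longrightarrow> a = 0 \<and> b = 0) \<and> L = proj_line P Q)"

definition proj_cubic :: "real vec \<Rightarrow> real vec \<Rightarrow> real vec \<Rightarrow> real vec \<Rightarrow> complex vec set" where
  "proj_cubic M0 M1 M2 M3 = {(s^3) \<cdot>\<^sub>v cvec M0 + (s^2 * t) \<cdot>\<^sub>v cvec M1 + (s * t^2) \<cdot>\<^sub>v cvec M2
      + (t^3) \<cdot>\<^sub>v cvec M3 | s t. (s, t) \<noteq> (0, 0)}"

definition space_cubic :: "complex vec set \<Rightarrow> bool" where
  "space_cubic C \<longleftrightarrow> (\<exists>M0 M1 M2 M3. M0 \<in> carrier_vec 4 \<and> M1 \<in> carrier_vec 4 \<and>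
      M2 \<in> carrier_vec 4 \<and> M3 \<in> carrier_vec 4 \<and>
      det (mat_of_cols 4 [M0, M1, M2, M3]) \<noteq> 0 \<and> C = proj_cubic M0 M1 M2 M3)"

definition is_real_vec :: "complex vec \<Rightarrow> bool" where
  "is_real_vec X \<longleftrightarrow> (\<forall>i < dim_vec X. Im (X $ i) = 0)"

(* Segre characteristic [22] with eigenvalues z, conj z: A^{-1}B (over C) has Jordan form
   consisting of one 2x2 block for z and one 2x2 block for cnj z *)
definition segre_22 :: "real mat \<Rightarrow> real mat \<Rightarrow> complex \<Rightarrow> bool" where
  "segre_22 A B z \<longleftrightarrow> invertible_mat A \<and>
     (\<exists>M \<in> carrier_mat 4 4. cmat A * M = cmat B \<and> jordan_nf M [(2, z), (2, cnj z)])"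

end

theory Submission
  imports Defs "Jordan_Normal_Form.Jordan_Normal_Form_Uniqueness" "Jordan_Normal_Form.Jordan_Normal_Form_Existence"
begin

lemma sym_eigen_real:
  fixes S :: "real mat" and c :: complex
  assumes S: "S \<in> carrier_mat n n" and sym: "transpose_mat S = S"
    and v: "v \<in> carrier_vec n" "v \<noteq> 0\<^sub>v n" and ev: "cmat S *\<^sub>v v = c \<cdot>\<^sub>v v"
  shows "Im c = 0"
proof -
  define x where "x = (\<Sum>i<n. \<Sum>j<n. cnj (v$i) * complex_of_real (S$$(i,j)) * v$j)"
  define y where "y = (\<Sum>i<n. cnj (v$i) * v$i)"
  have symij: "S$$(i,j) = S$$(j,i)" if "i<n" "j<n" for i j
    using sym that S by (metis carrier_matD(1) carrier_matD(2) index_transpose_mat(1))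
  have "cnj x = (\<Sum>i<n. \<Sum>j<n. v$i * complex_of_real (S$$(i,j)) * cnj (v$j))"
    unfolding x_def by (simp add: sum_distrib_left)
  also have "\<dots> = (\<Sum>j<n. \<Sum>i<n. v$i * complex_of_real (S$$(i,j)) * cnj (v$j))"
    by (rule sum.swap)
  also have "\<dots> = x" unfolding x_def
    by (intro sum.cong refl, simp add: symij mult.commute mult.left_commute)
  finally have xr: "cnj x = x" .
  have "x = (\<Sum>i<n. cnj (v$i) * (cmat S *\<^sub>v v)$i)"
    unfolding x_def using S v
    by (auto simp: scalar_prod_def sum_distrib_left mult.assoc intro!: sum.cong)
  also have "\<dots> = c * y" unfolding ev y_def using v by (auto simp: sum_distrib_left intro!: sum.cong)
  finally have xy: "x = c * y" .
  have yr: "cnj y = y" unfolding y_def by (simp add: mult.commute)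
  have "y \<noteq> 0"
  proof
    assume y0: "y = 0"
    have "Re y = (\<Sum>i<n. (cmod (v$i))^2)" unfolding y_def
      by (simp add: complex_mult_cnj cmod_def power2_eq_square)
    hence "(\<Sum>i<n. (cmod (v$i))^2) = 0" using y0 by simp
    hence "\<forall>i\<in>{..<n}. (cmod (v$i))^2 = 0" by (subst (asm) sum_nonneg_eq_0_iff) auto
    hence "v = 0\<^sub>v n" using v by (intro eq_vecI) auto
    with v show False by simp
  qed
  from xr xy yr have "cnj c * y = c * y" by (metis complex_cnj_mult)
  with \<open>y \<noteq> 0\<close> have "cnj c = c" by simp
  thus ?thesis by (metis Reals_cnj_iff complex_is_Real_iff)
qed

lemma prod_lin_of_real:
  "(\<Prod>r\<leftarrow>rs. [:- complex_of_real r, 1:]) = map_poly of_real (\<Prod>r\<leftarrow>rs. [:- r, 1:])"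
proof -
  interpret h: map_poly_comm_ring_hom "of_real :: real \<Rightarrow> complex" ..
  show ?thesis
  proof (induct rs)
    case (Cons a rs)
    have "map_poly of_real [:-a,1:] = [:-complex_of_real a, 1:]" by simp
    then show ?case using Cons by (simp only: list.map prod_list.Cons h.hom_mult)
  qed simp
qed

lemma sym_char_poly_split:
  fixes S :: "real mat"
  assumes S: "S \<in> carrier_mat n n" and sym: "transpose_mat S = S"
  shows "\<exists>rs. char_poly S = (\<Prod>r\<leftarrow>rs. [:- r, 1:])"
proof -
  let ?p = "char_poly (cmat S)"
  have cS: "cmat S \<in> carrier_mat n n" using S by simp
  have cp: "?p = map_poly of_real (char_poly S)"
    by (rule of_real_hom.char_poly_hom[OF S])
  have lc: "lead_coeff ?p = 1" using degree_monic_char_poly[OF cS] by simp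
  obtain cs where cs: "Polynomial.smult (lead_coeff ?p) (\<Prod>a\<leftarrow>cs. [:- a, 1:]) = ?p"
    using fundamental_theorem_algebra_factorized by blast
  hence cs': "?p = (\<Prod>a\<leftarrow>cs. [:- a, 1:])" using lc by simp
  have real: "Im c = 0" if c: "c \<in> set cs" for c
  proof -
    have "poly ?p c = 0" unfolding cs' using c by (rule linear_poly_root)
    hence "eigenvalue (cmat S) c" using eigenvalue_root_char_poly[OF cS] by simp
    then obtain v where "eigenvector (cmat S) v c" unfolding eigenvalue_def by blast
    hence v: "v \<in> carrier_vec n" "v \<noteq> 0\<^sub>v n" "cmat S *\<^sub>v v = c \<cdot>\<^sub>v v"
      unfolding eigenvector_def using S by auto
    show ?thesis by (rule sym_eigen_real[OF S sym v])
  qed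
  define rs where "rs = map Re cs"
  have "cs = map complex_of_real rs" unfolding rs_def using real
    by (induct cs) (auto simp: complex_eq_iff)
  hence "(\<Prod>a\<leftarrow>cs. [:- a, 1:]) = (\<Prod>r\<leftarrow>rs. [:- complex_of_real r, 1:])"
    by (simp add: o_def)
  also have "\<dots> = map_poly of_real (\<Prod>r\<leftarrow>rs. [:- r, 1:])" by (rule prod_lin_of_real)
  finally have "map_poly complex_of_real (char_poly S) = map_poly of_real (\<Prod>r\<leftarrow>rs. [:- r, 1:])"
    using cp cs' by simp
  hence "char_poly S = (\<Prod>r\<leftarrow>rs. [:- r, 1:])"
    by (simp add: poly_eq_iff coeff_map_poly)
  thus ?thesis by blast
qed

lemma jm_diag: "jordan_matrix (map (\<lambda>a. (1::nat, a)) as) = mat_diag (length as) (\<lambda>i. as!i)"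
proof (induct as)
  case Nil
  show ?case by (rule eq_matI, auto simp: jordan_matrix_def mat_diag_def)
next
  case (Cons a as)
  have dims: "sum_list (map fst (map (\<lambda>a. (1::nat, a)) as)) = length as" by (induct as) auto
  show ?case unfolding list.map jordan_matrix_Cons Cons dims
    by (rule eq_matI) (auto simp: jordan_block_def nth_Cons' four_block_mat_def mat_diag_def)
qed

lemma real_sprod_self_0:
  fixes x :: "real vec"
  assumes "x \<in> carrier_vec n" "x \<bullet> x = 0"
  shows "x = 0\<^sub>v n"
proof -
  have "(\<Sum>i<n. (x$i)^2) = 0" using assms by (simp add: scalar_prod_def power2_eq_square lessThan_atLeast0)
  hence "\<forall>i\<in>{..<n}. (x$i)^2 = 0" by (subst (asm) sum_nonneg_eq_0_iff) auto
  thus ?thesis using assms by (intro eq_vecI) auto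
qed

lemma sum_list_min12: "sum_list (map (min (1::nat)) l) \<le> sum_list (map (min 2) l)"
  by (induct l) auto

lemma sum_list_min12_eq: "sum_list (map (min (1::nat)) l) = sum_list (map (min 2) l) \<Longrightarrow> \<forall>k\<in>set l. k \<le> 1"
proof (induct l)
  case (Cons a l)
  have "min 1 a \<le> min 2 a" by simp
  with sum_list_min12[of l] Cons(2) have "min 1 a = min 2 a" "sum_list (map (min (1::nat)) l) = sum_list (map (min 2) l)"
    by auto
  with Cons(1) show ?case by auto
qed simp

lemma sym_jordan_sizes:
  fixes S :: "real mat"
  assumes S: "S \<in> carrier_mat n n" and sym: "transpose_mat S = S" and jnf: "jordan_nf S n_as"
  shows "\<forall>(k,a)\<in>set n_as. k = 1"
proof (clarify)
  fix k ev assume kev: "(k, ev) \<in> set n_as"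
  define C where "C = char_matrix S ev"
  have C: "C \<in> carrier_mat n n" unfolding C_def using S by simp
  have Csym: "transpose_mat C = C" unfolding C_def char_matrix_def
  proof (rule eq_matI)
    fix i j assume "i < dim_row (S + - ev \<cdot>\<^sub>m 1\<^sub>m (dim_row S))" "j < dim_col (S + - ev \<cdot>\<^sub>m 1\<^sub>m (dim_row S))"
    hence ij: "i < n" "j < n" using S by auto
    have "S $$ (j, i) = S $$ (i, j)" using sym ij S by (metis carrier_matD(1) carrier_matD(2) index_transpose_mat(1))
    thus "transpose_mat (S + - ev \<cdot>\<^sub>m 1\<^sub>m (dim_row S)) $$ (i, j) = (S + - ev \<cdot>\<^sub>m 1\<^sub>m (dim_row S)) $$ (i, j)"
      using ij S by auto
  qed (insert S, auto)
  have ker: "mat_kernel (C ^\<^sub>m 2) = mat_kernel C"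
  proof
    have C2: "C ^\<^sub>m 2 = C * C" using C by (simp add: numeral_2_eq_2)
    show "mat_kernel (C ^\<^sub>m 2) \<subseteq> mat_kernel C"
    proof
      fix v assume "v \<in> mat_kernel (C ^\<^sub>m 2)"
      hence v: "v \<in> carrier_vec n" "C * C *\<^sub>v v = 0\<^sub>v n" unfolding C2 mat_kernel_def using C by auto
      have "C *\<^sub>v (C *\<^sub>v v) = 0\<^sub>v n" using v C by (metis assoc_mult_mat_vec)
      hence "(transpose_mat C *\<^sub>v v) \<bullet> (C *\<^sub>v v) = 0"
        using transpose_vec_mult_scalar[OF C _ v(1), of "C *\<^sub>v v"] C v by simp
      hence "(C *\<^sub>v v) \<bullet> (C *\<^sub>v v) = 0" using Csym by simp
      hence "C *\<^sub>v v = 0\<^sub>v n" using real_sprod_self_0[of "C *\<^sub>v v" n] C by (meson mult_mat_vec_carrier v(1))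
      thus "v \<in> mat_kernel C" unfolding mat_kernel_def using v C by auto
    qed
    show "mat_kernel C \<subseteq> mat_kernel (C ^\<^sub>m 2)"
    proof
      fix v assume "v \<in> mat_kernel C"
      hence v: "v \<in> carrier_vec n" "C *\<^sub>v v = 0\<^sub>v n" unfolding mat_kernel_def using C by auto
      have "C * C *\<^sub>v v = 0\<^sub>v n" using v C by (auto simp: assoc_mult_mat_vec)
      thus "v \<in> mat_kernel (C ^\<^sub>m 2)" unfolding C2 mat_kernel_def using v C by auto
    qed
  qed
  have C1: "C ^\<^sub>m 1 = C" using C by simp
  have "dim_gen_eigenspace S ev 1 = dim_gen_eigenspace S ev 2"
    unfolding dim_gen_eigenspace_def C_def[symmetric] kernel_dim_def C1 ker
    using C by simp
  hence "sum_list (map (min 1) (map fst [(n, e)\<leftarrow>n_as . e = ev])) = sum_list (map (min 2) (map fst [(n, e)\<leftarrow>n_as . e = ev]))"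
    unfolding dim_gen_eigenspace[OF jnf] by (simp add: sum_list_def)
  from sum_list_min12_eq[OF this] kev have "k \<le> 1" by force
  moreover have "k \<noteq> 0" using jnf kev unfolding jordan_nf_def by force
  ultimately show "k = 1" by simp
qed


lemma sym_diag:
  fixes S :: "real mat"
  assumes S: "S \<in> carrier_mat n n" and sym: "transpose_mat S = S"
  shows "\<exists>P Q as. P \<in> carrier_mat n n \<and> Q \<in> carrier_mat n n \<and> P * Q = 1\<^sub>m n \<and> Q * P = 1\<^sub>m n
     \<and> length as = n \<and> S * P = P * mat_diag n (\<lambda>i. as!i)
     \<and> (\<forall>r. Polynomial.order r (char_poly S) = length (filter ((=) r) as))
     \<and> (\<forall>r. poly (char_poly S) r = 0 \<longleftrightarrow> r \<in> set as)"
proof -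
  obtain rs where "char_poly S = (\<Prod>r\<leftarrow>rs. [:- r, 1:])" using sym_char_poly_split[OF S sym] by blast
  from jordan_nf_exists[OF S this] obtain n_as where jnf: "jordan_nf S n_as" by blast
  from sym_jordan_sizes[OF S sym jnf] have one: "\<forall>(k,a)\<in>set n_as. k = 1" .
  define as where "as = map snd n_as"
  have nas: "n_as = map (\<lambda>a. (1::nat, a)) as" unfolding as_def using one
    by (induct n_as) auto
  from jnf[unfolded jordan_nf_def] have "similar_mat S (jordan_matrix n_as)" by simp
  then obtain P Q where wit: "similar_mat_wit S (jordan_matrix n_as) P Q" unfolding similar_mat_def by blast
  have J: "jordan_matrix n_as = mat_diag (length as) (\<lambda>i. as!i)" unfolding nas by (rule jm_diag)
  from wit S have carr: "jordan_matrix n_as \<in> carrier_mat n n" "P \<in> carrier_mat n n" "Q \<in> carrier_mat n n"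
    and PQ: "P * Q = 1\<^sub>m n" "Q * P = 1\<^sub>m n" and SPJQ: "S = P * jordan_matrix n_as * Q"
    unfolding similar_mat_wit_def Let_def by auto
  have len: "length as = n" using carr(1) unfolding J carrier_mat_def by (simp add: mat_diag_def)
  have "S * P = P * jordan_matrix n_as * Q * P" using SPJQ by simp
  also have "\<dots> = P * jordan_matrix n_as * (Q * P)" using carr by (meson assoc_mult_mat mult_carrier_mat)
  also have "\<dots> = P * jordan_matrix n_as" using carr PQ by (metis mult_carrier_mat right_mult_one_mat)
  finally have SP: "S * P = P * mat_diag n (\<lambda>i. as!i)" unfolding J len .
  have ord: "Polynomial.order r (char_poly S) = length (filter ((=) r) as)" for r
    unfolding jordan_nf_order[OF jnf] nas by (induct as) auto
  have cp0: "char_poly S \<noteq> 0" using degree_monic_char_poly[OF S] by auto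
  have roots: "poly (char_poly S) r = 0 \<longleftrightarrow> r \<in> set as" for r
  proof -
    have "poly (char_poly S) r = 0 \<longleftrightarrow> Polynomial.order r (char_poly S) \<noteq> 0" using cp0 order_root by blast
    also have "\<dots> \<longleftrightarrow> r \<in> set as" unfolding ord by (auto simp: filter_empty_conv)
    finally show ?thesis .
  qed
  show ?thesis using carr PQ len SP ord roots by blast
qed

lemma num_pos_eig_count:
  fixes S :: "real mat"
  assumes ord: "\<And>r. Polynomial.order r (char_poly S) = length (filter ((=) r) as)"
    and roots: "\<And>r. poly (char_poly S) r = 0 \<longleftrightarrow> r \<in> set as"
  shows "num_pos_eig S = length (filter (\<lambda>a. a > 0) as)"
proof -
  let ?X = "{r. r > 0 \<and> poly (char_poly S) r = 0}"
  have X: "?X = set (filter (\<lambda>a. a > 0) as)" using roots by auto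
  have "num_pos_eig S = (\<Sum>r\<in>?X. count_list (filter (\<lambda>a. a > 0) as) r)"
    unfolding num_pos_eig_def ord count_list_eq_length_filter
    by (intro sum.cong refl) (auto simp: filter_filter intro!: arg_cong[of _ _ length] filter_cong)
  also have "\<dots> = length (filter (\<lambda>a. a > 0) as)" unfolding X by (rule sum_count_set) auto
  finally show ?thesis .
qed


lemma gram_expand:
  fixes P :: "real mat"
  assumes P: "P \<in> carrier_mat n n" and a: "a \<in> carrier_vec n" and b: "b \<in> carrier_vec n"
  shows "(P *\<^sub>v a) \<bullet> (P *\<^sub>v b) = (\<Sum>i<n. \<Sum>j<n. (transpose_mat P * P)$$(i,j) * a$j * b$i)"
proof -
  let ?G = "transpose_mat P * P"
  have G: "?G \<in> carrier_mat n n" using P by simp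
  have "(P *\<^sub>v a) \<bullet> (P *\<^sub>v b) = (transpose_mat P *\<^sub>v (P *\<^sub>v a)) \<bullet> b"
    using transpose_vec_mult_scalar[OF P b, of "P *\<^sub>v a"] P a by simp
  also have "transpose_mat P *\<^sub>v (P *\<^sub>v a) = ?G *\<^sub>v a" using P a by simp
  also have "(?G *\<^sub>v a) \<bullet> b = (\<Sum>i<n. (\<Sum>j<n. ?G$$(i,j) * a$j) * b$i)"
    using G a b by (auto simp: scalar_prod_def lessThan_atLeast0 intro!: sum.cong)
  also have "\<dots> = (\<Sum>i<n. \<Sum>j<n. ?G$$(i,j) * a$j * b$i)" by (simp add: sum_distrib_right)
  finally show ?thesis .
qed

lemma real_sprod_self_ge0: fixes x :: "real vec" shows "x \<bullet> x \<ge> 0"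
  by (simp add: scalar_prod_def sum_nonneg)

lemma psd_diag:
  fixes S P :: "real mat" and d :: "nat \<Rightarrow> real"
  assumes S: "S \<in> carrier_mat n n" and Ssym: "transpose_mat S = S" and P: "P \<in> carrier_mat n n"
    and SP: "S * P = P * mat_diag n d" and g: "g \<in> carrier_vec n"
    and z: "\<And>i. i < n \<Longrightarrow> d i < 0 \<Longrightarrow> g $ i = 0"
  shows "(P *\<^sub>v g) \<bullet> (S *\<^sub>v (P *\<^sub>v g)) \<ge> 0"
proof -
  define G where "G = transpose_mat P * P"
  define D where "D = mat_diag n d"
  have G: "G \<in> carrier_mat n n" unfolding G_def using P by simp
  have D: "D \<in> carrier_mat n n" unfolding D_def by simp
  define M where "M = transpose_mat P * S * P"
  have PT: "transpose_mat P \<in> carrier_mat n n" using P by simp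
  have "M = transpose_mat P * (S * P)" unfolding M_def using assoc_mult_mat[OF PT S P] .
  also have "\<dots> = transpose_mat P * (P * D)" unfolding SP D_def ..
  also have "\<dots> = G * D" unfolding G_def using assoc_mult_mat[OF PT P D] by simp
  finally have M1: "M = G * D" .
  have SPc: "S * P \<in> carrier_mat n n" using S P by simp
  have M0: "M = transpose_mat P * (S * P)" unfolding M_def using assoc_mult_mat[OF PT S P] .
  have "transpose_mat M = transpose_mat (S * P) * transpose_mat (transpose_mat P)"
    unfolding M0 by (rule transpose_mult[OF PT SPc])
  also have "\<dots> = (transpose_mat P * transpose_mat S) * P" using transpose_mult[OF S P] by simp
  also have "\<dots> = M" unfolding Ssym M_def ..
  finally have "transpose_mat M = M" .
  hence Msym: "M $$ (i,j) = M $$ (j,i)" if "i < n" "j < n" for i j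
    using that G D M1 by (metis carrier_matD(1) carrier_matD(2) index_mult_mat(2) index_mult_mat(3) index_transpose_mat(1))
  have GD: "M $$ (i,j) = G$$(i,j) * d j" if "i < n" "j < n" for i j
    unfolding M1 D_def using mat_diag_mult_right[OF G, of d] that by simp
  have Gsym: "G $$ (i,j) = G $$ (j,i)" if "i < n" "j < n" for i j
    unfolding G_def using that P by (simp add: comm_scalar_prod[of _ n])
  have orth: "G$$(i,j) * d j = d i * G$$(i,j)" if "i < n" "j < n" for i j
    using Msym[OF that] GD[OF that] GD[OF that(2,1)] Gsym[OF that] by simp
  define Dg where "Dg = vec n (\<lambda>i. d i * g$i)"
  have Dg: "Dg \<in> carrier_vec n" unfolding Dg_def by simp
  have DgE: "D *\<^sub>v g = Dg"
  proof (rule eq_vecI)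
    fix i assume "i < dim_vec Dg"
    hence i: "i < n" unfolding Dg_def by simp
    have "(D *\<^sub>v g) $ i = (\<Sum>j\<in>{0..<n}. (if i = j then d j else 0) * g$j)"
      using i g unfolding D_def by (simp add: mat_diag_def scalar_prod_def)
    also have "\<dots> = (\<Sum>j\<in>{0..<n}. if i = j then d j * g$j else 0)" by (intro sum.cong) auto
    also have "\<dots> = d i * g$i" using i by simp
    finally show "(D *\<^sub>v g) $ i = Dg $ i" unfolding Dg_def using i by simp
  qed (insert D Dg, auto)
  have "S *\<^sub>v (P *\<^sub>v g) = (S * P) *\<^sub>v g" using S P g by simp
  also have "\<dots> = P *\<^sub>v (D *\<^sub>v g)" unfolding SP D_def[symmetric] using P D g by simp
  finally have SPg: "S *\<^sub>v (P *\<^sub>v g) = P *\<^sub>v Dg" unfolding DgE .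
  define h where "h = vec n (\<lambda>i. sqrt (max (d i) 0) * g$i)"
  have h: "h \<in> carrier_vec n" unfolding h_def by simp
  have trm: "G$$(i,j) * g$j * Dg$i = G$$(i,j) * h$j * h$i" if ij: "i < n" "j < n" for i j
  proof (cases "d i < 0 \<or> d j < 0")
    case True
    then show ?thesis using z ij unfolding h_def Dg_def by auto
  next
    case False
    hence nn: "d i \<ge> 0" "d j \<ge> 0" by auto
    show ?thesis
    proof (cases "d i = d j")
      case True
      have "sqrt (d j) * sqrt (d i) = d i" using True nn by (simp add: real_sqrt_mult[symmetric])
      then show ?thesis using nn ij unfolding h_def Dg_def by (simp add: algebra_simps)
    next
      case False
      hence "G$$(i,j) = 0" using orth[OF ij] by (metis mult.commute mult_cancel_left)
      then show ?thesis by simp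
    qed
  qed
  have "(P *\<^sub>v g) \<bullet> (S *\<^sub>v (P *\<^sub>v g)) = (\<Sum>i<n. \<Sum>j<n. G$$(i,j) * g$j * Dg$i)"
    unfolding SPg G_def by (rule gram_expand[OF P g Dg])
  also have "\<dots> = (\<Sum>i<n. \<Sum>j<n. G$$(i,j) * h$j * h$i)" using trm by (intro sum.cong refl) auto
  also have "\<dots> = (P *\<^sub>v h) \<bullet> (P *\<^sub>v h)" unfolding G_def by (rule gram_expand[OF P h h, symmetric])
  finally show ?thesis using real_sprod_self_ge0 by simp
qed


lemma smult_mat_vec_assoc:
  fixes A :: "'a :: comm_ring_1 mat"
  assumes A: "A \<in> carrier_mat n m" and x: "x \<in> carrier_vec m"
  shows "(c \<cdot>\<^sub>m A) *\<^sub>v x = c \<cdot>\<^sub>v (A *\<^sub>v x)"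
  using A x by (intro eq_vecI) (auto simp: scalar_prod_def sum_distrib_left ac_simps intro!: sum.cong)

lemma kill_one:
  fixes a b :: "nat \<Rightarrow> real"
  assumes "finite K" "card K \<le> 1"
  shows "\<exists>e1 e2. (e1, e2) \<noteq> (0, 0) \<and> (\<forall>i\<in>K. e1 * a i + e2 * b i = 0)"
proof (cases "K = {}")
  case True
  then show ?thesis by (intro exI[of _ 1] exI[of _ 0]) auto
next
  case False
  then obtain k where k: "k \<in> K" by blast
  have K: "K = {k}" using assms k by (auto simp: card_le_Suc0_iff_eq)
  show ?thesis
  proof (cases "a k = 0 \<and> b k = 0")
    case True
    then show ?thesis unfolding K by (intro exI[of _ 1] exI[of _ 0]) auto
  next
    case False
    then show ?thesis unfolding K by (intro exI[of _ "b k"] exI[of _ "- a k"]) (auto simp: mult.commute)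
  qed
qed

lemma kill_psd:
  fixes S P Q :: "real mat" and d :: "nat \<Rightarrow> real"
  assumes S: "S \<in> carrier_mat 4 4" and Ssym: "transpose_mat S = S" and P: "P \<in> carrier_mat 4 4"
    and Q: "Q \<in> carrier_mat 4 4" and PQ: "P * Q = 1\<^sub>m 4"
    and SP: "S * P = P * mat_diag 4 d" and v: "v1 \<in> carrier_vec 4" "v2 \<in> carrier_vec 4"
    and card: "card {i. i < 4 \<and> d i < 0} \<le> 1"
  shows "\<exists>e1 e2. (e1, e2) \<noteq> (0, 0) \<and> (e1 \<cdot>\<^sub>v v1 + e2 \<cdot>\<^sub>v v2) \<bullet> (S *\<^sub>v (e1 \<cdot>\<^sub>v v1 + e2 \<cdot>\<^sub>v v2)) \<ge> 0"
proof -
  define g1 where "g1 = Q *\<^sub>v v1"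
  define g2 where "g2 = Q *\<^sub>v v2"
  have g: "g1 \<in> carrier_vec 4" "g2 \<in> carrier_vec 4" unfolding g1_def g2_def using Q v by auto
  have Pg: "P *\<^sub>v g1 = v1" "P *\<^sub>v g2 = v2" unfolding g1_def g2_def using P Q v PQ
    by (simp_all add: assoc_mult_mat_vec[symmetric])
  obtain e1 e2 where e: "(e1, e2) \<noteq> (0, 0)" and ek: "\<forall>i\<in>{i. i < 4 \<and> d i < 0}. e1 * g1$i + e2 * g2$i = 0"
    using kill_one[of "{i. i < 4 \<and> d i < 0}", OF _ card, of "\<lambda>i. g1$i" "\<lambda>i. g2$i"] by auto
  define g where "g = e1 \<cdot>\<^sub>v g1 + e2 \<cdot>\<^sub>v g2"
  have gc: "g \<in> carrier_vec 4" unfolding g_def using g by simp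
  have "P *\<^sub>v g = e1 \<cdot>\<^sub>v v1 + e2 \<cdot>\<^sub>v v2" unfolding g_def
    using P g Pg by (simp add: mult_add_distrib_mat_vec[OF P] mult_mat_vec[OF P])
  moreover have "(P *\<^sub>v g) \<bullet> (S *\<^sub>v (P *\<^sub>v g)) \<ge> 0"
    by (rule psd_diag[OF S Ssym P SP gc]) (use ek g in \<open>auto simp: g_def\<close>)
  ultimately show ?thesis using e by auto
qed

lemma signature_2:
  fixes S :: "real mat" and u1 u2 w1 w2 :: "real vec"
  assumes S: "S \<in> carrier_mat 4 4" and Ssym: "transpose_mat S = S"
    and u: "u1 \<in> carrier_vec 4" "u2 \<in> carrier_vec 4" and w: "w1 \<in> carrier_vec 4" "w2 \<in> carrier_vec 4"
    and pos: "\<And>e1 e2. (e1, e2) \<noteq> (0, 0) \<Longrightarrow> (e1 \<cdot>\<^sub>v u1 + e2 \<cdot>\<^sub>v u2) \<bullet> (S *\<^sub>v (e1 \<cdot>\<^sub>v u1 + e2 \<cdot>\<^sub>v u2)) > 0"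
    and neg: "\<And>e1 e2. (e1, e2) \<noteq> (0, 0) \<Longrightarrow> (e1 \<cdot>\<^sub>v w1 + e2 \<cdot>\<^sub>v w2) \<bullet> (S *\<^sub>v (e1 \<cdot>\<^sub>v w1 + e2 \<cdot>\<^sub>v w2)) < 0"
  shows "num_pos_eig S = 2"
proof -
  obtain P Q as where P: "P \<in> carrier_mat 4 4" and Q: "Q \<in> carrier_mat 4 4" and PQ: "P * Q = 1\<^sub>m 4"
    and len: "length as = 4" and SP: "S * P = P * mat_diag 4 (\<lambda>i. as!i)"
    and ord: "\<forall>r. Polynomial.order r (char_poly S) = length (filter ((=) r) as)"
    and roots: "\<forall>r. poly (char_poly S) r = 0 \<longleftrightarrow> r \<in> set as"
    using sym_diag[OF S Ssym] by blast
  define Ip where "Ip = {i. i < 4 \<and> as!i > 0}"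
  define In where "In = {i. i < 4 \<and> as!i < 0}"
  have "num_pos_eig S = length (filter (\<lambda>a. a > 0) as)"
    by (rule num_pos_eig_count) (use ord roots in auto)
  also have "\<dots> = card Ip" unfolding length_filter_conv_card Ip_def len ..
  finally have npe: "num_pos_eig S = card Ip" .
  have fin: "finite Ip" "finite In" unfolding Ip_def In_def by auto
  have disj: "Ip \<inter> In = {}" "Ip \<union> In \<subseteq> {0..<4}" unfolding Ip_def In_def by auto
  have "card (Ip \<union> In) = card Ip + card In" using fin disj(1) by (rule card_Un_disjoint)
  moreover have "card (Ip \<union> In) \<le> card {0..<(4::nat)}" using disj(2) by (intro card_mono) auto
  ultimately have cardsum: "card Ip + card In \<le> 4" by simp
  have not3: "\<not> card Ip \<ge> 3"
  proof
    assume "card Ip \<ge> 3"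
    hence "card In \<le> 1" using cardsum by simp
    from kill_psd[OF S Ssym P Q PQ SP w] this obtain e1 e2 where
      h1: "(e1, e2) \<noteq> (0, 0)" and h2: "(e1 \<cdot>\<^sub>v w1 + e2 \<cdot>\<^sub>v w2) \<bullet> (S *\<^sub>v (e1 \<cdot>\<^sub>v w1 + e2 \<cdot>\<^sub>v w2)) \<ge> 0"
      unfolding In_def by blast
    from neg[OF h1] h2 show False by simp
  qed
  have not1: "\<not> card Ip \<le> 1"
  proof
    assume c: "card Ip \<le> 1"
    let ?S = "(-1::real) \<cdot>\<^sub>m S"
    have S': "?S \<in> carrier_mat 4 4" using S by simp
    have S'sym: "transpose_mat ?S = ?S" using Ssym S by (intro eq_matI) (auto, metis carrier_matD index_transpose_mat(1))
    have "?S * P = (-1::real) \<cdot>\<^sub>m (S * P)" using mult_smult_assoc_mat[OF S P] by simp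
    also have "\<dots> = (-1::real) \<cdot>\<^sub>m (P * mat_diag 4 (\<lambda>i. as!i))" unfolding SP ..
    also have "\<dots> = P * ((-1::real) \<cdot>\<^sub>m mat_diag 4 (\<lambda>i. as!i))" using mult_smult_distrib[OF P mat_diag_dim] by simp
    also have "(-1::real) \<cdot>\<^sub>m mat_diag 4 (\<lambda>i. as!i) = mat_diag 4 (\<lambda>i. - as!i)"
      by (rule eq_matI) (auto simp: mat_diag_def)
    finally have SP': "?S * P = P * mat_diag 4 (\<lambda>i. - as!i)" .
    have "card {i. i < 4 \<and> - as!i < 0} \<le> 1" using c unfolding Ip_def by simp
    from kill_psd[OF S' S'sym P Q PQ SP' u this] obtain e1 e2 where
      e: "(e1, e2) \<noteq> (0, 0)" and ge: "(e1 \<cdot>\<^sub>v u1 + e2 \<cdot>\<^sub>v u2) \<bullet> (?S *\<^sub>v (e1 \<cdot>\<^sub>v u1 + e2 \<cdot>\<^sub>v u2)) \<ge> 0"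
      by blast
    have x: "e1 \<cdot>\<^sub>v u1 + e2 \<cdot>\<^sub>v u2 \<in> carrier_vec 4" using u by simp
    have "(e1 \<cdot>\<^sub>v u1 + e2 \<cdot>\<^sub>v u2) \<bullet> (?S *\<^sub>v (e1 \<cdot>\<^sub>v u1 + e2 \<cdot>\<^sub>v u2))
       = - ((e1 \<cdot>\<^sub>v u1 + e2 \<cdot>\<^sub>v u2) \<bullet> (S *\<^sub>v (e1 \<cdot>\<^sub>v u1 + e2 \<cdot>\<^sub>v u2)))"
      using S x by (simp add: smult_mat_vec_assoc[OF S x])
    with ge pos[OF e] show False by simp
  qed
  from not1 not3 npe show ?thesis by simp
qed


lemma cmat_sym:
  assumes A: "A \<in> carrier_mat n n" and sym: "transpose_mat A = A"
  shows "transpose_mat (cmat A) = cmat A"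
proof (rule eq_matI)
  fix i j assume "i < dim_row (cmat A)" "j < dim_col (cmat A)"
  hence ij: "i < n" "j < n" using A by auto
  have "A $$ (j, i) = A $$ (i, j)" using sym ij A by (metis carrier_matD(1) carrier_matD(2) index_transpose_mat(1))
  thus "transpose_mat (cmat A) $$ (i, j) = cmat A $$ (i, j)" using ij A by simp
qed (insert A, auto)

lemma bil_sym:
  fixes K :: "'a :: comm_ring_1 mat"
  assumes K: "K \<in> carrier_mat n n" and sym: "transpose_mat K = K"
    and x: "x \<in> carrier_vec n" and y: "y \<in> carrier_vec n"
  shows "x \<bullet> (K *\<^sub>v y) = y \<bullet> (K *\<^sub>v x)"
proof -
  have "x \<bullet> (K *\<^sub>v y) = (transpose_mat K *\<^sub>v x) \<bullet> y" using transpose_vec_mult_scalar[OF K y x] by simp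
  also have "\<dots> = y \<bullet> (K *\<^sub>v x)" unfolding sym using K x y by (simp add: comm_scalar_prod[of _ n])
  finally show ?thesis .
qed

lemma conj_cmat_mult:
  assumes A: "A \<in> carrier_mat n m" and x: "x \<in> carrier_vec m"
  shows "map_vec cnj (cmat A *\<^sub>v x) = cmat A *\<^sub>v map_vec cnj x"
  using A x by (intro eq_vecI) (auto simp: scalar_prod_def)

lemma mat4_mult_vec:
  fixes P :: "'a :: comm_ring_1 mat"
  assumes P: "P \<in> carrier_mat 4 4" and y: "y \<in> carrier_vec 4"
  shows "P *\<^sub>v y = y$0 \<cdot>\<^sub>v col P 0 + y$1 \<cdot>\<^sub>v col P 1 + y$2 \<cdot>\<^sub>v col P 2 + y$3 \<cdot>\<^sub>v col P 3"
proof (rule eq_vecI)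
  fix i assume "i < dim_vec (y$0 \<cdot>\<^sub>v col P 0 + y$1 \<cdot>\<^sub>v col P 1 + y$2 \<cdot>\<^sub>v col P 2 + y$3 \<cdot>\<^sub>v col P 3)"
  hence i: "i < 4" using P by simp
  have s: "{0..<4::nat} = {0,1,2,3}" by auto
  show "(P *\<^sub>v y) $ i = (y$0 \<cdot>\<^sub>v col P 0 + y$1 \<cdot>\<^sub>v col P 1 + y$2 \<cdot>\<^sub>v col P 2 + y$3 \<cdot>\<^sub>v col P 3) $ i"
    using P y i by (simp add: scalar_prod_def s mult.commute)
qed (insert P, auto)


lemma conj_sprod:
  assumes "x \<in> carrier_vec n" "y \<in> carrier_vec n"
  shows "map_vec cnj x \<bullet> map_vec cnj y = cnj (x \<bullet> y)"
  using assms by (simp add: scalar_prod_def)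

lemma cube_root_ex: "(w::complex) \<noteq> 0 \<Longrightarrow> \<exists>c. c \<noteq> 0 \<and> c ^ 3 = w"
proof -
  assume w: "w \<noteq> 0"
  obtain c where "poly (pCons (-w) (pCons 0 [:0, 1:])) c = 0"
    using basic_cqe_conv2[of "[:0, 1:]" "-w" 0] by auto
  hence "c ^ 3 = w" by (simp add: power3_eq_cube algebra_simps)
  thus ?thesis using w by auto
qed

locale pencil4 =
  fixes A B :: "real mat" and z :: complex and b0 b1 :: "complex vec"
  assumes A: "A \<in> carrier_mat 4 4" and B: "B \<in> carrier_mat 4 4"
    and Asym: "transpose_mat A = A" and Bsym: "transpose_mat B = B"
    and Imz: "Im z \<noteq> 0"
    and b0: "b0 \<in> carrier_vec 4" and b1: "b1 \<in> carrier_vec 4"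
    and ch0: "cmat B *\<^sub>v b0 = z \<cdot>\<^sub>v (cmat A *\<^sub>v b0)"
    and ch1: "cmat B *\<^sub>v b1 = z \<cdot>\<^sub>v (cmat A *\<^sub>v b1) + cmat A *\<^sub>v b0"
    and anz: "b0 \<bullet> (cmat A *\<^sub>v b1) \<noteq> 0"
begin

definition "b2 = map_vec cnj b0"
definition "b3 = map_vec cnj b1"
definition "ga x y = x \<bullet> (cmat A *\<^sub>v y)"
definition "gb x y = x \<bullet> (cmat B *\<^sub>v y)"
definition "a = ga b0 b1"
definition "bb = ga b1 b1"

lemma cA[simp]: "cmat A \<in> carrier_mat 4 4" using A by simp
lemma cB[simp]: "cmat B \<in> carrier_mat 4 4" using B by simp
lemma bc[simp]: "b0 \<in> carrier_vec 4" "b1 \<in> carrier_vec 4" "b2 \<in> carrier_vec 4" "b3 \<in> carrier_vec 4"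
  using b0 b1 unfolding b2_def b3_def by auto

lemma bdim[simp]: "dim_vec b0 = 4" "dim_vec b1 = 4" "dim_vec b2 = 4" "dim_vec b3 = 4"
  using bc by auto

lemma zz: "z \<noteq> cnj z" using Imz by (metis cnj.simps(2) neg_equal_zero)

lemma ga_sym: "x \<in> carrier_vec 4 \<Longrightarrow> y \<in> carrier_vec 4 \<Longrightarrow> ga x y = ga y x"
  unfolding ga_def by (rule bil_sym[OF cA cmat_sym[OF A Asym]])
lemma gb_sym: "x \<in> carrier_vec 4 \<Longrightarrow> y \<in> carrier_vec 4 \<Longrightarrow> gb x y = gb y x"
  unfolding gb_def by (rule bil_sym[OF cB cmat_sym[OF B Bsym]])

lemma ga_lin[simp]:
  assumes x: "x \<in> carrier_vec 4" and y: "y \<in> carrier_vec 4" and w: "w \<in> carrier_vec 4"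
  shows "ga (x + y) w = ga x w + ga y w" "ga w (x + y) = ga w x + ga w y"
proof -
  have Aw: "cmat A *\<^sub>v w \<in> carrier_vec 4" "cmat A *\<^sub>v x \<in> carrier_vec 4" "cmat A *\<^sub>v y \<in> carrier_vec 4"
    using x y w mult_mat_vec_carrier[OF cA] by auto
  show "ga (x + y) w = ga x w + ga y w" unfolding ga_def by (rule add_scalar_prod_distrib[OF x y Aw(1)])
  show "ga w (x + y) = ga w x + ga w y" unfolding ga_def mult_add_distrib_mat_vec[OF cA x y]
    by (rule scalar_prod_add_distrib[OF w Aw(2,3)])
qed

lemma ga_smult[simp]:
  assumes x: "x \<in> carrier_vec 4" and w: "w \<in> carrier_vec 4"
  shows "ga (c \<cdot>\<^sub>v x) w = c * ga x w" "ga w (c \<cdot>\<^sub>v x) = c * ga w x"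
proof -
  have Aw: "cmat A *\<^sub>v w \<in> carrier_vec 4" "cmat A *\<^sub>v x \<in> carrier_vec 4"
    using x w mult_mat_vec_carrier[OF cA] by auto
  show "ga (c \<cdot>\<^sub>v x) w = c * ga x w" unfolding ga_def by (rule smult_scalar_prod_distrib[OF x Aw(1)])
  show "ga w (c \<cdot>\<^sub>v x) = c * ga w x" unfolding ga_def mult_mat_vec[OF cA x] using w Aw by simp
qed

lemma gb_lin[simp]:
  assumes x: "x \<in> carrier_vec 4" and y: "y \<in> carrier_vec 4" and w: "w \<in> carrier_vec 4"
  shows "gb (x + y) w = gb x w + gb y w" "gb w (x + y) = gb w x + gb w y"
proof -
  have Aw: "cmat B *\<^sub>v w \<in> carrier_vec 4" "cmat B *\<^sub>v x \<in> carrier_vec 4" "cmat B *\<^sub>v y \<in> carrier_vec 4"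
    using x y w mult_mat_vec_carrier[OF cB] by auto
  show "gb (x + y) w = gb x w + gb y w" unfolding gb_def by (rule add_scalar_prod_distrib[OF x y Aw(1)])
  show "gb w (x + y) = gb w x + gb w y" unfolding gb_def mult_add_distrib_mat_vec[OF cB x y]
    by (rule scalar_prod_add_distrib[OF w Aw(2,3)])
qed

lemma gb_smult[simp]:
  assumes x: "x \<in> carrier_vec 4" and w: "w \<in> carrier_vec 4"
  shows "gb (c \<cdot>\<^sub>v x) w = c * gb x w" "gb w (c \<cdot>\<^sub>v x) = c * gb w x"
proof -
  have Aw: "cmat B *\<^sub>v w \<in> carrier_vec 4" "cmat B *\<^sub>v x \<in> carrier_vec 4"
    using x w mult_mat_vec_carrier[OF cB] by auto
  show "gb (c \<cdot>\<^sub>v x) w = c * gb x w" unfolding gb_def by (rule smult_scalar_prod_distrib[OF x Aw(1)])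
  show "gb w (c \<cdot>\<^sub>v x) = c * gb w x" unfolding gb_def mult_mat_vec[OF cB x] using w Aw by simp
qed

lemma ch2: "cmat B *\<^sub>v b2 = cnj z \<cdot>\<^sub>v (cmat A *\<^sub>v b2)"
proof -
  have "map_vec cnj (cmat B *\<^sub>v b0) = map_vec cnj (z \<cdot>\<^sub>v (cmat A *\<^sub>v b0))" using ch0 by simp
  also have "map_vec cnj (z \<cdot>\<^sub>v (cmat A *\<^sub>v b0)) = cnj z \<cdot>\<^sub>v map_vec cnj (cmat A *\<^sub>v b0)"
    by (intro eq_vecI) auto
  finally show ?thesis unfolding b2_def conj_cmat_mult[OF A b0] conj_cmat_mult[OF B b0] .
qed

lemma ch3: "cmat B *\<^sub>v b3 = cnj z \<cdot>\<^sub>v (cmat A *\<^sub>v b3) + cmat A *\<^sub>v b2"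
proof -
  have "map_vec cnj (cmat B *\<^sub>v b1) = map_vec cnj (z \<cdot>\<^sub>v (cmat A *\<^sub>v b1) + cmat A *\<^sub>v b0)" using ch1 by simp
  also have "map_vec cnj (z \<cdot>\<^sub>v (cmat A *\<^sub>v b1) + cmat A *\<^sub>v b0) = cnj z \<cdot>\<^sub>v map_vec cnj (cmat A *\<^sub>v b1) + map_vec cnj (cmat A *\<^sub>v b0)"
    by (intro eq_vecI) auto
  finally show ?thesis unfolding b2_def b3_def conj_cmat_mult[OF A b0] conj_cmat_mult[OF A b1] conj_cmat_mult[OF B b1] .
qed


lemma gb_ch:
  assumes x: "x \<in> carrier_vec 4"
  shows "gb x b0 = z * ga x b0" "gb x b1 = z * ga x b1 + ga x b0"
    "gb x b2 = cnj z * ga x b2" "gb x b3 = cnj z * ga x b3 + ga x b2"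
proof -
  have c: "cmat A *\<^sub>v b0 \<in> carrier_vec 4" "cmat A *\<^sub>v b1 \<in> carrier_vec 4"
    "cmat A *\<^sub>v b2 \<in> carrier_vec 4" "cmat A *\<^sub>v b3 \<in> carrier_vec 4"
    using mult_mat_vec_carrier[OF cA] by auto
  show "gb x b0 = z * ga x b0" unfolding gb_def ga_def ch0 using x c by simp
  show "gb x b2 = cnj z * ga x b2" unfolding gb_def ga_def ch2 using x c by simp
  show "gb x b1 = z * ga x b1 + ga x b0" unfolding gb_def ga_def ch1
    using x c by (simp add: scalar_prod_add_distrib[of x 4])
  show "gb x b3 = cnj z * ga x b3 + ga x b2" unfolding gb_def ga_def ch3
    using x c by (simp add: scalar_prod_add_distrib[of x 4])
qed

lemma ga_cnj:
  assumes x: "x \<in> carrier_vec 4" and y: "y \<in> carrier_vec 4"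
  shows "ga (map_vec cnj x) (map_vec cnj y) = cnj (ga x y)"
  unfolding ga_def conj_cmat_mult[OF A y, symmetric]
  by (rule conj_sprod[of _ 4]) (use x y mult_mat_vec_carrier[OF cA] in auto)

lemma cancel_z: "cnj z * g = z * g \<Longrightarrow> g = 0"
proof -
  assume "cnj z * g = z * g"
  hence "(cnj z - z) * g = 0" by (simp add: left_diff_distrib)
  thus "g = 0" using zz by simp
qed

lemma gram:
  "ga b0 b0 = 0" "ga b0 b2 = 0" "ga b0 b3 = 0" "ga b1 b2 = 0" "ga b1 b3 = 0"
  "ga b2 b2 = 0" "ga b2 b3 = cnj a" "ga b3 b3 = cnj bb"
proof -
  have s: "ga x y = ga y x" "gb x y = gb y x" if "x \<in> carrier_vec 4" "y \<in> carrier_vec 4" for x y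
    using ga_sym gb_sym that by auto
  note g = gb_ch[OF bc(1)] gb_ch[OF bc(2)] gb_ch[OF bc(3)] gb_ch[OF bc(4)]
  have zz': "z - cnj z \<noteq> 0" using zz by simp
  show g00: "ga b0 b0 = 0" using g(2) g(5) s[OF bc(1) bc(2)] by (simp add: algebra_simps)
  have gs: "ga x y = ga y x" "gb x y = gb y x" if "x \<in> carrier_vec 4" "y \<in> carrier_vec 4" for x y
    using ga_sym gb_sym that by auto
  have "cnj z * ga b0 b2 = gb b0 b2" using gb_ch(3)[OF bc(1)] by simp
  also have "\<dots> = gb b2 b0" by (rule gs(2)) auto
  also have "\<dots> = z * ga b2 b0" using gb_ch(1)[OF bc(3)] .
  also have "\<dots> = z * ga b0 b2" using gs(1)[OF bc(3) bc(1)] by simp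
  finally have g02: "ga b0 b2 = 0" by (rule cancel_z)
  have "cnj z * ga b0 b3 = gb b0 b3" using gb_ch(4)[OF bc(1)] g02 by simp
  also have "\<dots> = gb b3 b0" by (rule gs(2)) auto
  also have "\<dots> = z * ga b3 b0" using gb_ch(1)[OF bc(4)] .
  also have "\<dots> = z * ga b0 b3" using gs(1)[OF bc(4) bc(1)] by simp
  finally have g03: "ga b0 b3 = 0" by (rule cancel_z)
  have g20: "ga b2 b0 = 0" using g02 gs(1)[OF bc(3) bc(1)] by simp
  have "cnj z * ga b1 b2 = gb b1 b2" using gb_ch(3)[OF bc(2)] by simp
  also have "\<dots> = gb b2 b1" by (rule gs(2)) auto
  also have "\<dots> = z * ga b2 b1" using gb_ch(2)[OF bc(3)] g20 by simp
  also have "\<dots> = z * ga b1 b2" using gs(1)[OF bc(3) bc(2)] by simp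
  finally have g12: "ga b1 b2 = 0" by (rule cancel_z)
  have g30: "ga b3 b0 = 0" using g03 gs(1)[OF bc(4) bc(1)] by simp
  have "cnj z * ga b1 b3 = gb b1 b3" using gb_ch(4)[OF bc(2)] g12 by simp
  also have "\<dots> = gb b3 b1" by (rule gs(2)) auto
  also have "\<dots> = z * ga b3 b1" using gb_ch(2)[OF bc(4)] g30 by simp
  also have "\<dots> = z * ga b1 b3" using gs(1)[OF bc(4) bc(2)] by simp
  finally show "ga b1 b3 = 0" by (rule cancel_z)
  show "ga b0 b2 = 0" "ga b0 b3 = 0" "ga b1 b2 = 0" by fact+
  show "ga b2 b2 = 0" unfolding b2_def ga_cnj[OF b0 b0] g00 by simp
  show "ga b2 b3 = cnj a" unfolding b2_def b3_def ga_cnj[OF b0 b1] a_def ..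
  show "ga b3 b3 = cnj bb" unfolding b3_def ga_cnj[OF b1 b1] bb_def ..
qed

lemma a_nz: "a \<noteq> 0" using anz unfolding a_def ga_def .

definition "comb p q r s = p \<cdot>\<^sub>v b0 + q \<cdot>\<^sub>v b1 + r \<cdot>\<^sub>v b2 + s \<cdot>\<^sub>v b3"

lemma comb_c[simp]: "comb p q r s \<in> carrier_vec 4" unfolding comb_def by simp

lemma ga_comb:
  "ga (comb p q r s) (comb p' q' r' s') =
    a * (p * q' + q * p') + bb * q * q' + cnj a * (r * s' + s * r') + cnj bb * s * s'"
proof -
  have s: "ga x y = ga y x" if "x \<in> carrier_vec 4" "y \<in> carrier_vec 4" for x y
    using ga_sym that by auto
  have g: "ga b1 b0 = a" "ga b0 b1 = a" "ga b1 b1 = bb" "ga b2 b0 = 0" "ga b3 b0 = 0" "ga b2 b1 = 0" "ga b3 b1 = 0"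
    "ga b3 b2 = cnj a" 
    using gram s[OF bc(1) bc(2)] s[OF bc(1) bc(3)] s[OF bc(1) bc(4)] s[OF bc(2) bc(3)] s[OF bc(2) bc(4)]
      s[OF bc(3) bc(4)] unfolding a_def bb_def by auto
  show ?thesis unfolding comb_def using gram g by (simp add: algebra_simps)
qed

lemma cB_comb:
  "cmat B *\<^sub>v comb p q r s = cmat A *\<^sub>v comb (z * p + q) (z * q) (cnj z * r + s) (cnj z * s)"
proof -
  have c: "cmat A *\<^sub>v b0 \<in> carrier_vec 4" "cmat A *\<^sub>v b1 \<in> carrier_vec 4"
    "cmat A *\<^sub>v b2 \<in> carrier_vec 4" "cmat A *\<^sub>v b3 \<in> carrier_vec 4"
    using mult_mat_vec_carrier[OF cA] by auto
  show ?thesis unfolding comb_def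
    by (simp add: mult_add_distrib_mat_vec[OF cA] mult_add_distrib_mat_vec[OF cB] mult_mat_vec[OF cA] mult_mat_vec[OF cB]
        ch0 ch1 ch2 ch3)
       (rule eq_vecI, use c in \<open>auto simp: algebra_simps\<close>)
qed

lemma gb_comb:
  "gb (comb p q r s) (comb p' q' r' s') = ga (comb p q r s) (comb (z * p' + q') (z * q') (cnj z * r' + s') (cnj z * s'))"
  unfolding gb_def ga_def cB_comb ..


lemma comb_coord:
  "ga (comb 1 0 0 0) (comb p q r s) = a * q"
  "ga (comb 0 1 0 0) (comb p q r s) = a * p + bb * q"
  "ga (comb 0 0 1 0) (comb p q r s) = cnj a * s"
  "ga (comb 0 0 0 1) (comb p q r s) = cnj a * r + cnj bb * s"
  unfolding ga_comb by simp_all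

lemma comb_eq:
  assumes "comb p q r s = comb p' q' r' s'"
  shows "p = p' \<and> q = q' \<and> r = r' \<and> s = s'"
proof -
  have an: "a \<noteq> 0" "cnj a \<noteq> 0" using a_nz by auto
  from comb_coord(1)[of p q r s] comb_coord(1)[of p' q' r' s'] assms an have q: "q = q'" by simp
  from comb_coord(3)[of p q r s] comb_coord(3)[of p' q' r' s'] assms an have s: "s = s'" by simp
  from comb_coord(2)[of p q r s] comb_coord(2)[of p' q' r' s'] assms an q have p: "p = p'" by simp
  from comb_coord(4)[of p q r s] comb_coord(4)[of p' q' r' s'] assms an s have r: "r = r'" by simp
  show ?thesis using p q r s by simp
qed

lemma comb_0: "comb 0 0 0 0 = 0\<^sub>v 4" unfolding comb_def by (intro eq_vecI) auto

lemma comb_eq0: "comb p q r s = 0\<^sub>v 4 \<longleftrightarrow> p = 0 \<and> q = 0 \<and> r = 0 \<and> s = 0"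
  using comb_eq[of p q r s 0 0 0 0] comb_0 by auto

definition "Tm = mat_of_cols 4 [b0, b1, b2, b3]"

lemma Tm: "Tm \<in> carrier_mat 4 4" unfolding Tm_def using mat_of_cols_carrier(1)[of 4 "[b0, b1, b2, b3]"] by (simp add: numeral_eq_Suc)

lemma Tm_col: "col Tm 0 = b0" "col Tm 1 = b1" "col Tm 2 = b2" "col Tm 3 = b3"
  unfolding Tm_def by (subst col_mat_of_cols; simp)+

lemma Tm_mult: "y \<in> carrier_vec 4 \<Longrightarrow> Tm *\<^sub>v y = comb (y$0) (y$1) (y$2) (y$3)"
  unfolding mat4_mult_vec[OF Tm] comb_def Tm_col ..

lemma comb_surj:
  assumes X: "X \<in> carrier_vec 4"
  shows "\<exists>p q r s. X = comb p q r s"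
proof -
  have "det Tm \<noteq> 0"
  proof
    assume "det Tm = 0"
    then obtain v where v: "v \<in> carrier_vec 4" "v \<noteq> 0\<^sub>v 4" "Tm *\<^sub>v v = 0\<^sub>v 4"
      using det_0_iff_vec_prod_zero[OF Tm] by blast
    hence "v$0 = 0 \<and> v$1 = 0 \<and> v$2 = 0 \<and> v$3 = 0" using Tm_mult comb_eq0 by metis
    hence "v = 0\<^sub>v 4" using v(1) by (intro eq_vecI) (auto simp: less_Suc_eq numeral_eq_Suc)
    with v show False by simp
  qed
  from det_non_zero_imp_unit[OF Tm this] obtain Ti where Ti: "Ti \<in> carrier_mat 4 4" "Tm * Ti = 1\<^sub>m 4"
    unfolding Units_def ring_mat_def by auto
  have "X = Tm *\<^sub>v (Ti *\<^sub>v X)" using Ti Tm X by (simp add: assoc_mult_mat_vec[symmetric])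
  also have "\<dots> = comb ((Ti *\<^sub>v X)$0) ((Ti *\<^sub>v X)$1) ((Ti *\<^sub>v X)$2) ((Ti *\<^sub>v X)$3)"
    by (rule Tm_mult) (use Ti X in simp)
  finally show ?thesis by blast
qed

lemma conj_comb: "map_vec cnj (comb p q r s) = comb (cnj r) (cnj s) (cnj p) (cnj q)"
  unfolding comb_def b2_def b3_def by (intro eq_vecI) auto

lemma is_real_iff: "X \<in> carrier_vec 4 \<Longrightarrow> is_real_vec X \<longleftrightarrow> map_vec cnj X = X"
  unfolding is_real_vec_def by (auto simp: vec_eq_iff complex_eq_iff)

lemma comb_real: "is_real_vec (comb p q r s) \<longleftrightarrow> r = cnj p \<and> s = cnj q"
  unfolding is_real_iff[OF comb_c] conj_comb using comb_eq by fastforce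


definition "d = z - cnj z"
definition "al1 = - cnj a / (2 * a * d)"
definition "al2 = - (d * bb + a) / (2 * a * d)"
definition "F1 p q s = 2 * a * d * p * q + (d * bb + a) * q^2 + cnj a * s^2"
definition "F2 q r s = - 2 * cnj a * d * r * s + (cnj a - d * cnj bb) * s^2 + a * q^2"
definition "cub s t = comb (al1 * t^3 + al2 * s^2 * t) (s^2 * t) (cnj al1 * s^3 + cnj al2 * s * t^2) (s * t^2)"

lemma d_nz: "d \<noteq> 0" unfolding d_def using zz by simp
lemma cnj_d: "cnj d = - d" unfolding d_def by simp

lemma QA: "ga (comb p q r s) (comb p q r s) = 2*a*p*q + bb*q^2 + 2*cnj a*r*s + cnj bb*s^2"
  unfolding ga_comb by (simp add: algebra_simps power2_eq_square)

lemma QB1: "gb (comb p q r s) (comb p q r s) = cnj z * ga (comb p q r s) (comb p q r s) + F1 p q s"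
  unfolding gb_comb ga_comb F1_def d_def by (simp add: algebra_simps power2_eq_square)

lemma QB2: "gb (comb p q r s) (comb p q r s) = z * ga (comb p q r s) (comb p q r s) + F2 q r s"
  unfolding gb_comb ga_comb F2_def d_def by (simp add: algebra_simps power2_eq_square)

lemma cub_F1: "F1 (al1 * t^3 + al2 * s^2 * t) (s^2 * t) (s * t^2) = 0"
  using a_nz d_nz unfolding F1_def al1_def al2_def by (simp add: field_simps power2_eq_square power3_eq_cube)

lemma cub_F2: "F2 (s^2 * t) (cnj al1 * s^3 + cnj al2 * s * t^2) (s * t^2) = 0"
  using a_nz d_nz unfolding F2_def al1_def al2_def by (simp add: field_simps power2_eq_square power3_eq_cube cnj_d)


lemma comb4: "x0 \<cdot>\<^sub>v comb p0 q0 r0 s0 + x1 \<cdot>\<^sub>v comb p1 q1 r1 s1 + x2 \<cdot>\<^sub>v comb p2 q2 r2 s2 + x3 \<cdot>\<^sub>v comb p3 q3 r3 s3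
  = comb (x0*p0 + x1*p1 + x2*p2 + x3*p3) (x0*q0 + x1*q1 + x2*q2 + x3*q3) (x0*r0 + x1*r1 + x2*r2 + x3*r3) (x0*s0 + x1*s1 + x2*s2 + x3*s3)"
  unfolding comb_def by (intro eq_vecI) (auto simp: algebra_simps)

lemma comb2: "x0 \<cdot>\<^sub>v comb p0 q0 r0 s0 + x1 \<cdot>\<^sub>v comb p1 q1 r1 s1
  = comb (x0*p0 + x1*p1) (x0*q0 + x1*q1) (x0*r0 + x1*r1) (x0*s0 + x1*s1)"
  unfolding comb_def by (intro eq_vecI) (auto simp: algebra_simps)

lemma realize: "X \<in> carrier_vec 4 \<Longrightarrow> is_real_vec X \<Longrightarrow> cvec (map_vec Re X) = X"
  unfolding is_real_vec_def by (intro eq_vecI) (auto simp: complex_eq_iff)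

definition "RM w0 w1 = map_vec Re (comb w0 w1 (cnj w0) (cnj w1))"

lemma RM: "cvec (RM w0 w1) = comb w0 w1 (cnj w0) (cnj w1)" "RM w0 w1 \<in> carrier_vec 4"
  unfolding RM_def by (rule realize) (auto simp: comb_real)

definition "P0 = RM 1 0"
definition "Q0 = RM \<i> 0"
definition "M0 = RM (al1 + al2) 1"
definition "M1 = RM (\<i> * (al2 - 3 * al1)) \<i>"
definition "M2 = RM (al2 - 3 * al1) 1"
definition "M3 = RM (\<i> * (al1 + al2)) \<i>"

lemma line_param: "s \<cdot>\<^sub>v cvec P0 + t \<cdot>\<^sub>v cvec Q0 = comb (s + \<i> * t) 0 (s - \<i> * t) 0"
  unfolding P0_def Q0_def RM comb2 by (simp add: algebra_simps)

lemma cubic_param: "(s^3) \<cdot>\<^sub>v cvec M0 + (s^2 * t) \<cdot>\<^sub>v cvec M1 + (s * t^2) \<cdot>\<^sub>v cvec M2 + (t^3) \<cdot>\<^sub>v cvec M3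
   = cub (s + \<i> * t) (s - \<i> * t)"
  unfolding M0_def M1_def M2_def M3_def RM comb4 cub_def
  by (intro arg_cong4[where f = comb]) (simp_all add: algebra_simps power2_eq_square power3_eq_cube)


lemma line_set: "proj_line P0 Q0 = {comb p 0 r 0 | p r. (p, r) \<noteq> (0, 0)}"
proof (rule Set.set_eqI, rule iffI)
  fix X assume "X \<in> proj_line P0 Q0"
  then obtain s t where X: "X = s \<cdot>\<^sub>v cvec P0 + t \<cdot>\<^sub>v cvec Q0" and st: "(s, t) \<noteq> (0, 0)"
    unfolding proj_line_def by blast
  have "(s + \<i> * t, s - \<i> * t) \<noteq> (0, 0)"
  proof
    assume h: "(s + \<i> * t, s - \<i> * t) = (0, 0)"
    from h have h1: "s + \<i> * t = 0" by (metis fst_conv)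
    from h have h2: "s - \<i> * t = 0" by (metis snd_conv)
    have "2 * s = (s + \<i> * t) + (s - \<i> * t)" by simp
    hence "2 * s = 0" unfolding h1 h2 by simp
    hence "s = 0" by simp
    with h1 have "t = 0" by simp
    with st \<open>s = 0\<close> show False by simp
  qed
  thus "X \<in> {comb p 0 r 0 | p r. (p, r) \<noteq> (0, 0)}" unfolding X line_param by blast
next
  fix X assume "X \<in> {comb p 0 r 0 | p r. (p, r) \<noteq> (0, 0)}"
  then obtain p r where X: "X = comb p 0 r 0" and pr: "(p, r) \<noteq> (0, 0)" by blast
  define s where "s = (p + r) / 2"
  define t where "t = (p - r) / (2 * \<i>)"
  have e: "s + \<i> * t = p" "s - \<i> * t = r" unfolding s_def t_def by (simp_all add: field_simps)
  have "(s, t) \<noteq> (0, 0)"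
  proof
    assume "(s, t) = (0, 0)"
    hence "p = 0" "r = 0" using e by auto
    with pr show False by simp
  qed
  moreover have "X = s \<cdot>\<^sub>v cvec P0 + t \<cdot>\<^sub>v cvec Q0" unfolding line_param e X ..
  ultimately show "X \<in> proj_line P0 Q0" unfolding proj_line_def by blast
qed

lemma cubic_set: "proj_cubic M0 M1 M2 M3 = {cub s t | s t. (s, t) \<noteq> (0, 0)}"
proof (rule Set.set_eqI, rule iffI)
  fix X assume "X \<in> proj_cubic M0 M1 M2 M3"
  then obtain s t where X: "X = (s^3) \<cdot>\<^sub>v cvec M0 + (s^2 * t) \<cdot>\<^sub>v cvec M1 + (s * t^2) \<cdot>\<^sub>v cvec M2 + (t^3) \<cdot>\<^sub>v cvec M3"
    and st: "(s, t) \<noteq> (0, 0)" unfolding proj_cubic_def by blast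
  have "(s + \<i> * t, s - \<i> * t) \<noteq> (0, 0)"
  proof
    assume h: "(s + \<i> * t, s - \<i> * t) = (0, 0)"
    from h have h1: "s + \<i> * t = 0" by (metis fst_conv)
    from h have h2: "s - \<i> * t = 0" by (metis snd_conv)
    have "2 * s = (s + \<i> * t) + (s - \<i> * t)" by simp
    hence "2 * s = 0" unfolding h1 h2 by simp
    hence "s = 0" by simp
    with h1 have "t = 0" by simp
    with st \<open>s = 0\<close> show False by simp
  qed
  thus "X \<in> {cub s t | s t. (s, t) \<noteq> (0, 0)}" unfolding X cubic_param by blast
next
  fix X assume "X \<in> {cub s t | s t. (s, t) \<noteq> (0, 0)}"
  then obtain p r where X: "X = cub p r" and pr: "(p, r) \<noteq> (0, 0)" by blast
  define s where "s = (p + r) / 2"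
  define t where "t = (p - r) / (2 * \<i>)"
  have e: "s + \<i> * t = p" "s - \<i> * t = r" unfolding s_def t_def by (simp_all add: field_simps)
  have "(s, t) \<noteq> (0, 0)"
  proof
    assume "(s, t) = (0, 0)"
    hence "p = 0" "r = 0" using e by auto
    with pr show False by simp
  qed
  moreover have "X = (s^3) \<cdot>\<^sub>v cvec M0 + (s^2 * t) \<cdot>\<^sub>v cvec M1 + (s * t^2) \<cdot>\<^sub>v cvec M2 + (t^3) \<cdot>\<^sub>v cvec M3"
    unfolding cubic_param e X ..
  ultimately show "X \<in> proj_cubic M0 M1 M2 M3" unfolding proj_cubic_def by blast
qed


lemma qsic_comb: "comb p q r s \<in> qsic A B \<longleftrightarrow> \<not> (p = 0 \<and> q = 0 \<and> r = 0 \<and> s = 0) \<and> F1 p q s = 0 \<and> F2 q r s = 0"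
proof -
  let ?X = "comb p q r s"
  have "?X \<in> qsic A B \<longleftrightarrow> ?X \<noteq> 0\<^sub>v 4 \<and> ga ?X ?X = 0 \<and> gb ?X ?X = 0"
    unfolding qsic_def ga_def gb_def by simp
  also have "ga ?X ?X = 0 \<and> gb ?X ?X = 0 \<longleftrightarrow> F1 p q s = 0 \<and> F2 q r s = 0"
  proof
    assume "ga ?X ?X = 0 \<and> gb ?X ?X = 0"
    hence h1: "ga ?X ?X = 0" and h2: "gb ?X ?X = 0" by auto
    have "F1 p q s = 0" using QB1[of p q r s] h1 h2 by simp
    moreover have "F2 q r s = 0" using QB2[of p q r s] h1 h2 by simp
    ultimately show "F1 p q s = 0 \<and> F2 q r s = 0" by simp
  next
    assume F: "F1 p q s = 0 \<and> F2 q r s = 0"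
    have "cnj z * ga ?X ?X = gb ?X ?X" using QB1[of p q r s] F by simp
    also have "\<dots> = z * ga ?X ?X" using QB2[of p q r s] F by simp
    finally have "cnj z * ga ?X ?X = z * ga ?X ?X" .
    hence "ga ?X ?X = 0" by (rule cancel_z)
    thus "ga ?X ?X = 0 \<and> gb ?X ?X = 0" using F QB1[of p q r s] by simp
  qed
  finally show ?thesis unfolding comb_eq0 by blast
qed

lemma al1_nz: "al1 \<noteq> 0" unfolding al1_def using a_nz d_nz by simp

lemma cub_nz: "(s, t) \<noteq> (0, 0) \<Longrightarrow> \<not> (al1 * t^3 + al2 * s^2 * t = 0 \<and> s^2 * t = 0 \<and> cnj al1 * s^3 + cnj al2 * s * t^2 = 0 \<and> s * t^2 = 0)"
  using al1_nz by auto

lemma qsic_eq: "qsic A B = proj_line P0 Q0 \<union> proj_cubic M0 M1 M2 M3"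
proof (rule Set.set_eqI, rule iffI)
  fix X assume X: "X \<in> qsic A B"
  hence "X \<in> carrier_vec 4" unfolding qsic_def by simp
  then obtain p q r s where Xc: "X = comb p q r s" using comb_surj by blast
  from X[unfolded Xc qsic_comb] have nz: "\<not> (p = 0 \<and> q = 0 \<and> r = 0 \<and> s = 0)"
    and f1: "F1 p q s = 0" and f2: "F2 q r s = 0" by auto
  have an: "a \<noteq> 0" "cnj a \<noteq> 0" using a_nz by auto
  show "X \<in> proj_line P0 Q0 \<union> proj_cubic M0 M1 M2 M3"
  proof (cases "q = 0")
    case True
    with f1 an have "s = 0" unfolding F1_def by simp
    with True nz have "X = comb p 0 r 0 \<and> (p, r) \<noteq> (0, 0)" unfolding Xc by auto
    thus ?thesis unfolding line_set by blast
  next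
    case False
    have s0: "s \<noteq> 0"
    proof
      assume "s = 0"
      with f2 an have "q = 0" unfolding F2_def by simp
      with False show False by simp
    qed
    obtain c where c: "c \<noteq> 0" "c ^ 3 = q * s" using cube_root_ex[of "q * s"] False s0 by auto
    define s' where "s' = q / c"
    define t' where "t' = s / c"
    have c3: "c * c * c = q * s" using c by (simp add: power3_eq_cube)
    have e1: "s'^2 * t' = q" unfolding s'_def t'_def using c c3 False s0
      by (simp add: field_simps power2_eq_square)
    have e2: "s' * t'^2 = s" unfolding s'_def t'_def using c c3 False s0
      by (simp add: field_simps power2_eq_square)
    have e3: "al1 * t'^3 + al2 * s'^2 * t' = p"
    proof -
      have h1: "al1 * t'^3 = al1 * s^2 / q" unfolding t'_def using c c3 False s0
        by (simp add: field_simps power3_eq_cube power2_eq_square)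
      have h2: "al2 * s'^2 * t' = al2 * q" using e1 by (simp add: mult.assoc)
      have h3: "al1 * s^2 / q + al2 * q = p"
      proof -
        have "2 * a * d * q * p = - ((d * bb + a) * q^2 + cnj a * s^2)" using f1 unfolding F1_def
          by (simp add: algebra_simps eq_neg_iff_add_eq_0)
        hence "p = - ((d * bb + a) * q^2 + cnj a * s^2) / (2 * a * d * q)" using an d_nz False
          by (simp add: field_simps)
        also have "\<dots> = al1 * s^2 / q + al2 * q" unfolding al1_def al2_def using an d_nz False
          by (simp add: field_simps power2_eq_square)
        finally show ?thesis by simp
      qed
      show ?thesis by (simp only: h1 h2 h3)
    qed
    have e4: "cnj al1 * s'^3 + cnj al2 * s' * t'^2 = r"
    proof -
      have h1: "cnj al1 * s'^3 = cnj al1 * q^2 / s" unfolding s'_def using c c3 False s0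
        by (simp add: field_simps power3_eq_cube power2_eq_square)
      have h2: "cnj al2 * s' * t'^2 = cnj al2 * s" using e2 by (simp add: mult.assoc)
      have h3: "cnj al1 * q^2 / s + cnj al2 * s = r"
      proof -
        have "2 * cnj a * d * s * r = (cnj a - d * cnj bb) * s^2 + a * q^2" using f2 unfolding F2_def
          by (simp add: algebra_simps)
        hence "r = ((cnj a - d * cnj bb) * s^2 + a * q^2) / (2 * cnj a * d * s)" using an d_nz s0
          by (simp add: field_simps)
        also have "\<dots> = cnj al1 * q^2 / s + cnj al2 * s" unfolding al1_def al2_def using an d_nz s0
          by (simp add: field_simps power2_eq_square cnj_d)
        finally show ?thesis by simp
      qed
      show ?thesis by (simp only: h1 h2 h3)
    qed
    have "X = cub s' t'" unfolding Xc cub_def e1 e2 e3 e4 ..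
    moreover have "(s', t') \<noteq> (0, 0)" unfolding s'_def using False c by simp
    ultimately show ?thesis unfolding cubic_set by blast
  qed
next
  fix X assume "X \<in> proj_line P0 Q0 \<union> proj_cubic M0 M1 M2 M3"
  thus "X \<in> qsic A B"
  proof
    assume "X \<in> proj_line P0 Q0"
    then obtain p r where X: "X = comb p 0 r 0" and pr: "(p, r) \<noteq> (0, 0)" unfolding line_set by blast
    show ?thesis unfolding X qsic_comb F1_def F2_def using pr by simp
  next
    assume "X \<in> proj_cubic M0 M1 M2 M3"
    then obtain s t where X: "X = cub s t" and st: "(s, t) \<noteq> (0, 0)" unfolding cubic_set by blast
    show ?thesis unfolding X cub_def qsic_comb using cub_F1 cub_F2 cub_nz[OF st] by blast
  qed
qed


lemma cvec_lin2:
  assumes "u \<in> carrier_vec 4" "w \<in> carrier_vec 4"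
  shows "cvec (x \<cdot>\<^sub>v u + y \<cdot>\<^sub>v w) = of_real x \<cdot>\<^sub>v cvec u + of_real y \<cdot>\<^sub>v cvec w"
  using assms by (intro eq_vecI) auto

lemma cvec_lin4:
  assumes "u0 \<in> carrier_vec 4" "u1 \<in> carrier_vec 4" "u2 \<in> carrier_vec 4" "u3 \<in> carrier_vec 4"
  shows "cvec (x0 \<cdot>\<^sub>v u0 + x1 \<cdot>\<^sub>v u1 + x2 \<cdot>\<^sub>v u2 + x3 \<cdot>\<^sub>v u3) =
    of_real x0 \<cdot>\<^sub>v cvec u0 + of_real x1 \<cdot>\<^sub>v cvec u1 + of_real x2 \<cdot>\<^sub>v cvec u2 + of_real x3 \<cdot>\<^sub>v cvec u3"
  using assms by (intro eq_vecI) auto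

lemma real_line_L: "real_line (proj_line P0 Q0)"
  unfolding real_line_def
proof (intro exI conjI allI impI)
  show P0c: "P0 \<in> carrier_vec 4" and Q0c: "Q0 \<in> carrier_vec 4" unfolding P0_def Q0_def using RM by auto
  fix x y :: real assume h: "x \<cdot>\<^sub>v P0 + y \<cdot>\<^sub>v Q0 = 0\<^sub>v 4"
  have "cvec (x \<cdot>\<^sub>v P0 + y \<cdot>\<^sub>v Q0) = 0\<^sub>v 4" unfolding h by (intro eq_vecI) auto
  hence "comb (of_real x + \<i> * of_real y) 0 (of_real x - \<i> * of_real y) 0 = 0\<^sub>v 4"
    unfolding cvec_lin2[OF P0c Q0c] line_param .
  hence "complex_of_real x + \<i> * complex_of_real y = 0" unfolding comb_eq0 by simp
  hence "Re (complex_of_real x + \<i> * complex_of_real y) = 0" "Im (complex_of_real x + \<i> * complex_of_real y) = 0"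
    by simp_all
  thus "x = 0" "y = 0" by simp_all
qed simp

lemma space_cubic_C: "space_cubic (proj_cubic M0 M1 M2 M3)"
  unfolding space_cubic_def
proof (intro exI conjI)
  show Mc: "M0 \<in> carrier_vec 4" "M1 \<in> carrier_vec 4" "M2 \<in> carrier_vec 4" "M3 \<in> carrier_vec 4"
    unfolding M0_def M1_def M2_def M3_def using RM by auto
  let ?M = "mat_of_cols 4 [M0, M1, M2, M3]"
  have M: "?M \<in> carrier_mat 4 4" using mat_of_cols_carrier(1)[of 4 "[M0, M1, M2, M3]"] by (simp add: numeral_eq_Suc)
  have col: "col ?M 0 = M0" "col ?M 1 = M1" "col ?M 2 = M2" "col ?M 3 = M3"
    using Mc by (subst col_mat_of_cols; simp)+
  show "det ?M \<noteq> 0"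
  proof
    assume "det ?M = 0"
    then obtain v where v: "v \<in> carrier_vec 4" "v \<noteq> 0\<^sub>v 4" "?M *\<^sub>v v = 0\<^sub>v 4"
      using det_0_iff_vec_prod_zero[OF M] by blast
    have "v$0 \<cdot>\<^sub>v M0 + v$1 \<cdot>\<^sub>v M1 + v$2 \<cdot>\<^sub>v M2 + v$3 \<cdot>\<^sub>v M3 = 0\<^sub>v 4"
      using v(3) unfolding mat4_mult_vec[OF M v(1)] col .
    hence "cvec (v$0 \<cdot>\<^sub>v M0 + v$1 \<cdot>\<^sub>v M1 + v$2 \<cdot>\<^sub>v M2 + v$3 \<cdot>\<^sub>v M3) = 0\<^sub>v 4"
      by (intro eq_vecI) auto
    hence "of_real (v$0) \<cdot>\<^sub>v cvec M0 + of_real (v$1) \<cdot>\<^sub>v cvec M1 + of_real (v$2) \<cdot>\<^sub>v cvec M2 + of_real (v$3) \<cdot>\<^sub>v cvec M3 = 0\<^sub>v 4"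
      unfolding cvec_lin4[OF Mc] .
    hence "comb (of_real (v$0) * (al1 + al2) + of_real (v$1) * (\<i> * (al2 - 3 * al1)) + of_real (v$2) * (al2 - 3 * al1) + of_real (v$3) * (\<i> * (al1 + al2)))
               (of_real (v$0) * 1 + of_real (v$1) * \<i> + of_real (v$2) * 1 + of_real (v$3) * \<i>) 
               (of_real (v$0) * cnj (al1 + al2) + of_real (v$1) * cnj (\<i> * (al2 - 3 * al1)) + of_real (v$2) * cnj (al2 - 3 * al1) + of_real (v$3) * cnj (\<i> * (al1 + al2)))
               (of_real (v$0) * cnj 1 + of_real (v$1) * cnj \<i> + of_real (v$2) * cnj 1 + of_real (v$3) * cnj \<i>) = 0\<^sub>v 4"
      unfolding M0_def M1_def M2_def M3_def RM comb4 .
    hence e1: "of_real (v$0) * (al1 + al2) + of_real (v$1) * (\<i> * (al2 - 3 * al1)) + of_real (v$2) * (al2 - 3 * al1) + of_real (v$3) * (\<i> * (al1 + al2)) = 0"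
      and e2: "of_real (v$0) * 1 + of_real (v$1) * \<i> + of_real (v$2) * 1 + of_real (v$3) * \<i> = (0::complex)"
      unfolding comb_eq0 by auto
    from arg_cong[OF e2, of Re] arg_cong[OF e2, of Im] have v02: "v$2 = - v$0" and v13: "v$3 = - v$1" by simp_all
    from e1 have "4 * al1 * (of_real (v$0) - \<i> * of_real (v$1)) = 0" unfolding v02 v13 by (simp add: algebra_simps)
    hence "complex_of_real (v$0) - \<i> * of_real (v$1) = 0" using al1_nz by simp
    from arg_cong[OF this, of Re] arg_cong[OF this, of Im] have "v$0 = 0" "v$1 = 0" by simp_all
    with v02 v13 have "v = 0\<^sub>v 4" using v(1) by (intro eq_vecI) (auto simp: less_Suc_eq numeral_eq_Suc)
    with v(2) show False by simp
  qed
qed simp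

lemma no_real_int: "X \<in> proj_line P0 Q0 \<inter> proj_cubic M0 M1 M2 M3 \<Longrightarrow> \<not> is_real_vec X"
proof
  assume X: "X \<in> proj_line P0 Q0 \<inter> proj_cubic M0 M1 M2 M3" and r: "is_real_vec X"
  from X obtain p r where Xl: "X = comb p 0 r 0" unfolding line_set by blast
  from X obtain s t where Xc: "X = cub s t" and st: "(s, t) \<noteq> (0, 0)" unfolding cubic_set by blast
  from Xl Xc have e: "p = al1 * t^3 + al2 * s^2 * t" "0 = s^2 * t" "r = cnj al1 * s^3 + cnj al2 * s * t^2" "0 = s * t^2"
    unfolding cub_def using comb_eq by blast+
  from r Xl have rp: "r = cnj p" using comb_real by simp
  from e(2) have "s = 0 \<or> t = 0" by simp
  thus False
  proof
    assume s: "s = 0"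
    with st have t: "t \<noteq> 0" by simp
    from e s have "p = al1 * t^3" "r = 0" by simp_all
    with rp t al1_nz show False by simp
  next
    assume t: "t = 0"
    with st have s: "s \<noteq> 0" by simp
    from e t have "p = 0" "r = cnj al1 * s^3" by simp_all
    with rp s al1_nz show False by simp
  qed
qed


lemma quadS:
  "of_real l * ga (comb p q r s) (comb p q r s) - gb (comb p q r s) (comb p q r s) =
   2*a*(of_real l - z)*p*q + ((of_real l - z)*bb - a)*q^2 + 2*cnj a*(of_real l - cnj z)*r*s + ((of_real l - cnj z) * cnj bb - cnj a)*s^2"
  unfolding gb_comb ga_comb by (simp add: algebra_simps power2_eq_square)

lemma real_quad:
  fixes l :: real and x :: "real vec"
  assumes x: "x \<in> carrier_vec 4"
  shows "of_real (x \<bullet> ((l \<cdot>\<^sub>m A - B) *\<^sub>v x)) = of_real l * ga (cvec x) (cvec x) - gb (cvec x) (cvec x)"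
proof -
  have S: "l \<cdot>\<^sub>m A - B \<in> carrier_mat 4 4" using A B by (metis minus_carrier_mat smult_carrier_mat)
  have "complex_of_real (x \<bullet> ((l \<cdot>\<^sub>m A - B) *\<^sub>v x)) = (\<Sum>i<4. \<Sum>j<4. of_real (x$i) * (of_real l * of_real (A$$(i,j)) - of_real (B$$(i,j))) * of_real (x$j))"
    using x A B S by (simp add: scalar_prod_def lessThan_atLeast0 sum_distrib_left algebra_simps)
  also have "\<dots> = of_real l * ga (cvec x) (cvec x) - gb (cvec x) (cvec x)"
    unfolding ga_def gb_def using x A B
    by (simp add: scalar_prod_def lessThan_atLeast0 sum_distrib_left sum_distrib_right algebra_simps sum_subtractf)
  finally show ?thesis .
qed

lemma eps_vectors:
  fixes l :: real and eps :: real
  shows "\<exists>v1 v2. v1 \<in> carrier_vec 4 \<and> v2 \<in> carrier_vec 4 \<and>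
    (\<forall>e1 e2. (e1 \<cdot>\<^sub>v v1 + e2 \<cdot>\<^sub>v v2) \<bullet> ((l \<cdot>\<^sub>m A - B) *\<^sub>v (e1 \<cdot>\<^sub>v v1 + e2 \<cdot>\<^sub>v v2)) = 2 * eps * (e1^2 + e2^2))"
proof -
  define u where "u = of_real l - z"
  have u0: "u \<noteq> 0" unfolding u_def using Imz by (metis Im_complex_of_real diff_zero minus_complex.simps(2) neg_equal_0_iff_equal right_minus_eq)
  have cu: "cnj u = of_real l - cnj z" unfolding u_def by simp
  have an: "a \<noteq> 0" using a_nz .
  define pe where "pe w = (of_real eps * cnj w - (u * bb - a) * w) / (2 * a * u)" for w
  define X where "X w = comb (pe w) w (cnj (pe w)) (cnj w)" for w
  define v1 where "v1 = map_vec Re (X 1)"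
  define v2 where "v2 = map_vec Re (X \<i>)"
  have Xr: "cvec (map_vec Re (X w)) = X w" "map_vec Re (X w) \<in> carrier_vec 4" for w
    unfolding X_def by (rule realize, simp, simp add: comb_real) simp
  have v: "v1 \<in> carrier_vec 4" "v2 \<in> carrier_vec 4" unfolding v1_def v2_def using Xr by auto
  have val: "of_real l * ga (X w) (X w) - gb (X w) (X w) = 2 * of_real eps * w * cnj w" for w
    unfolding X_def quadS u_def[symmetric] cu[symmetric] pe_def using an u0
    by (simp add: field_simps power2_eq_square)
  have lin: "cvec (e1 \<cdot>\<^sub>v v1 + e2 \<cdot>\<^sub>v v2) = X (of_real e1 + \<i> * of_real e2)" for e1 e2
  proof -
    have "cvec (e1 \<cdot>\<^sub>v v1 + e2 \<cdot>\<^sub>v v2) = of_real e1 \<cdot>\<^sub>v X 1 + of_real e2 \<cdot>\<^sub>v X \<i>"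
      unfolding cvec_lin2[OF v] unfolding v1_def v2_def Xr ..
    also have "\<dots> = X (of_real e1 + \<i> * of_real e2)" unfolding X_def comb2
      by (intro arg_cong4[where f = comb]) (simp_all add: pe_def field_simps an u0)
    finally show ?thesis .
  qed
  show ?thesis
  proof (intro exI conjI allI)
    fix e1 e2 :: real
    let ?x = "e1 \<cdot>\<^sub>v v1 + e2 \<cdot>\<^sub>v v2"
    have "complex_of_real (?x \<bullet> ((l \<cdot>\<^sub>m A - B) *\<^sub>v ?x)) = 2 * of_real eps * (of_real e1 + \<i> * of_real e2) * cnj (of_real e1 + \<i> * of_real e2)"
    proof -
      have xc: "?x \<in> carrier_vec 4" using v by simp
      show ?thesis unfolding real_quad[OF xc] lin val ..
    qed
    also have "\<dots> = complex_of_real (2 * eps * (e1^2 + e2^2))"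
      by (simp add: complex_eq_iff power2_eq_square algebra_simps)
    finally show "?x \<bullet> ((l \<cdot>\<^sub>m A - B) *\<^sub>v ?x) = 2 * eps * (e1^2 + e2^2)" by (simp only: of_real_eq_iff)
  qed (use v in auto)
qed

end


lemma J22: "jordan_matrix [(2,z::complex),(2,cnj z)] = mat 4 4 (\<lambda>(i,j). if i = j then (if i < 2 then z else cnj z) else if (i,j) = (0,1) then 1 else if (i,j) = (2,3) then 1 else 0)"
  by (rule eq_matI) (auto simp: jordan_matrix_def)

lemma chain_orth:
  fixes A B :: "real mat" and z w :: complex
  assumes A: "A \<in> carrier_mat 4 4" and B: "B \<in> carrier_mat 4 4"
    and Asym: "transpose_mat A = A" and Bsym: "transpose_mat B = B" and zw: "z \<noteq> w"
    and c: "c0 \<in> carrier_vec 4" "c1 \<in> carrier_vec 4" "c2 \<in> carrier_vec 4" "c3 \<in> carrier_vec 4"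
    and h0: "cmat B *\<^sub>v c0 = z \<cdot>\<^sub>v (cmat A *\<^sub>v c0)"
    and h1: "cmat B *\<^sub>v c1 = z \<cdot>\<^sub>v (cmat A *\<^sub>v c1) + cmat A *\<^sub>v c0"
    and h2: "cmat B *\<^sub>v c2 = w \<cdot>\<^sub>v (cmat A *\<^sub>v c2)"
    and h3: "cmat B *\<^sub>v c3 = w \<cdot>\<^sub>v (cmat A *\<^sub>v c3) + cmat A *\<^sub>v c2"
  shows "c0 \<bullet> (cmat A *\<^sub>v c0) = 0" "c0 \<bullet> (cmat A *\<^sub>v c2) = 0" "c0 \<bullet> (cmat A *\<^sub>v c3) = 0"
proof -
  have cA: "cmat A \<in> carrier_mat 4 4" and cB: "cmat B \<in> carrier_mat 4 4" using A B by auto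
  note sA = bil_sym[OF cA cmat_sym[OF A Asym]]
  note sB = bil_sym[OF cB cmat_sym[OF B Bsym]]
  have Ac: "cmat A *\<^sub>v x \<in> carrier_vec 4" if "x \<in> carrier_vec 4" for x using cA that by simp
  have canc: "g = 0" if "z * g = w * g" for g
  proof -
    from that have "(z - w) * g = 0" by (simp add: left_diff_distrib)
    thus ?thesis using zw by simp
  qed
  have "z * (c1 \<bullet> (cmat A *\<^sub>v c0)) = c1 \<bullet> (cmat B *\<^sub>v c0)" unfolding h0 using c Ac by simp
  also have "\<dots> = c0 \<bullet> (cmat B *\<^sub>v c1)" using sB c by auto
  also have "\<dots> = z * (c0 \<bullet> (cmat A *\<^sub>v c1)) + c0 \<bullet> (cmat A *\<^sub>v c0)" unfolding h1 using c Ac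
    by (simp add: scalar_prod_add_distrib[of _ 4])
  finally show g00: "c0 \<bullet> (cmat A *\<^sub>v c0) = 0" using sA c by auto
  have "z * (c2 \<bullet> (cmat A *\<^sub>v c0)) = c2 \<bullet> (cmat B *\<^sub>v c0)" unfolding h0 using c Ac by simp
  also have "\<dots> = c0 \<bullet> (cmat B *\<^sub>v c2)" using sB c by auto
  also have "\<dots> = w * (c0 \<bullet> (cmat A *\<^sub>v c2))" unfolding h2 using c Ac by simp
  also have "\<dots> = w * (c2 \<bullet> (cmat A *\<^sub>v c0))" using sA c by auto
  finally have "c2 \<bullet> (cmat A *\<^sub>v c0) = 0" by (rule canc)
  thus g02: "c0 \<bullet> (cmat A *\<^sub>v c2) = 0" using sA c by auto
  have "z * (c3 \<bullet> (cmat A *\<^sub>v c0)) = c3 \<bullet> (cmat B *\<^sub>v c0)" unfolding h0 using c Ac by simp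
  also have "\<dots> = c0 \<bullet> (cmat B *\<^sub>v c3)" using sB c by auto
  also have "\<dots> = w * (c0 \<bullet> (cmat A *\<^sub>v c3)) + c0 \<bullet> (cmat A *\<^sub>v c2)" unfolding h3 using c Ac
    by (simp add: scalar_prod_add_distrib[of _ 4])
  also have "\<dots> = w * (c3 \<bullet> (cmat A *\<^sub>v c0))" using sA c g02 by auto
  finally have "c3 \<bullet> (cmat A *\<^sub>v c0) = 0" by (rule canc)
  thus "c0 \<bullet> (cmat A *\<^sub>v c3) = 0" using sA c by auto
qed


lemma segre_pencil:
  fixes A B :: "real mat" and z :: complex
  assumes A: "A \<in> carrier_mat 4 4" and B: "B \<in> carrier_mat 4 4"
    and Asym: "transpose_mat A = A" and Bsym: "transpose_mat B = B"
    and Imz: "Im z \<noteq> 0" and seg: "segre_22 A B z"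
  shows "\<exists>b0 b1. pencil4 A B z b0 b1"
proof -
  from seg obtain M where invA: "invertible_mat A" and M: "M \<in> carrier_mat 4 4"
    and AM: "cmat A * M = cmat B" and jnf: "jordan_nf M [(2, z), (2, cnj z)]"
    unfolding segre_22_def by blast
  define Jm where "Jm = mat 4 4 (\<lambda>(i,j). if i = j then (if i < 2 then z else cnj z) else if (i,j) = (0,1) then 1 else if (i,j) = (2,3) then (1::complex) else 0)"
  let ?J = "Jm"
  from jnf obtain P Q where wit: "similar_mat_wit M (jordan_matrix [(2,z),(2,cnj z)]) P Q" unfolding jordan_nf_def similar_mat_def by blast
  hence wit: "similar_mat_wit M ?J P Q" unfolding J22 Jm_def .
  from wit M have P: "P \<in> carrier_mat 4 4" and Q: "Q \<in> carrier_mat 4 4" and J: "?J \<in> carrier_mat 4 4"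
    and PQ: "P * Q = 1\<^sub>m 4" and QP: "Q * P = 1\<^sub>m 4" and MPJQ: "M = P * ?J * Q"
    unfolding similar_mat_wit_def Let_def by auto
  have PJ: "P * ?J \<in> carrier_mat 4 4" using P J by simp
  have "M * P = P * ?J * Q * P" by (simp only: MPJQ)
  also have "\<dots> = P * ?J * (Q * P)" using assoc_mult_mat[OF PJ Q P] .
  also have "\<dots> = P * ?J" unfolding QP using right_mult_one_mat[OF PJ] .
  finally have MP: "M * P = P * ?J" .
  define c where "c k = col P k" for k
  have cc: "c k \<in> carrier_vec 4" for k unfolding c_def using P col_dim[of P k] by (simp add: carrier_matD)
  have s4: "{0..<4::nat} = {0,1,2,3}" by auto
  have Mc: "M *\<^sub>v c k = vec 4 (\<lambda>i. \<Sum>j\<in>{0..<4}. P $$ (i,j) * ?J $$ (j,k))" if k: "k < 4" for k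
  proof -
    have "M *\<^sub>v c k = col (M * P) k" unfolding c_def by (rule col_mult2[OF M P k, symmetric])
    also have "\<dots> = col (P * ?J) k" unfolding MP ..
    also have "\<dots> = vec 4 (\<lambda>i. \<Sum>j\<in>{0..<4}. P $$ (i,j) * ?J $$ (j,k))"
      using P J k by (intro eq_vecI) (auto simp: scalar_prod_def)
    finally show ?thesis .
  qed
  have M0: "M *\<^sub>v c 0 = z \<cdot>\<^sub>v c 0"
  proof -
    have "M *\<^sub>v c 0 = vec 4 (\<lambda>i. \<Sum>j\<in>{0..<4}. P $$ (i,j) * ?J $$ (j,0))" by (rule Mc) simp
    also have "\<dots> = z \<cdot>\<^sub>v c 0" using P by (intro eq_vecI) (auto simp: s4 Jm_def c_def)
    finally show ?thesis .
  qed
  have M1: "M *\<^sub>v c 1 = z \<cdot>\<^sub>v c 1 + c 0"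
  proof -
    have "M *\<^sub>v c 1 = vec 4 (\<lambda>i. \<Sum>j\<in>{0..<4}. P $$ (i,j) * ?J $$ (j,1))" by (rule Mc) simp
    also have "\<dots> = z \<cdot>\<^sub>v c 1 + c 0" using P by (intro eq_vecI) (auto simp: s4 Jm_def c_def)
    finally show ?thesis .
  qed
  have M2: "M *\<^sub>v c 2 = cnj z \<cdot>\<^sub>v c 2"
  proof -
    have "M *\<^sub>v c 2 = vec 4 (\<lambda>i. \<Sum>j\<in>{0..<4}. P $$ (i,j) * ?J $$ (j,2))" by (rule Mc) simp
    also have "\<dots> = cnj z \<cdot>\<^sub>v c 2" using P by (intro eq_vecI) (auto simp: s4 Jm_def c_def)
    finally show ?thesis .
  qed
  have M3: "M *\<^sub>v c 3 = cnj z \<cdot>\<^sub>v c 3 + c 2"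
  proof -
    have "M *\<^sub>v c 3 = vec 4 (\<lambda>i. \<Sum>j\<in>{0..<4}. P $$ (i,j) * ?J $$ (j,3))" by (rule Mc) simp
    also have "\<dots> = cnj z \<cdot>\<^sub>v c 3 + c 2" using P by (intro eq_vecI) (auto simp: s4 Jm_def c_def)
    finally show ?thesis .
  qed
  have cA: "cmat A \<in> carrier_mat 4 4" using A by simp
  have cBc: "cmat B *\<^sub>v x = cmat A *\<^sub>v (M *\<^sub>v x)" if "x \<in> carrier_vec 4" for x
    unfolding AM[symmetric] using cA M that by simp
  have h0: "cmat B *\<^sub>v c 0 = z \<cdot>\<^sub>v (cmat A *\<^sub>v c 0)" unfolding cBc[OF cc] M0 using cA cc by (simp add: mult_mat_vec)
  have h1: "cmat B *\<^sub>v c 1 = z \<cdot>\<^sub>v (cmat A *\<^sub>v c 1) + cmat A *\<^sub>v c 0" unfolding cBc[OF cc] M1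
    using cA cc by (simp add: mult_mat_vec mult_add_distrib_mat_vec[OF cA])
  have h2: "cmat B *\<^sub>v c 2 = cnj z \<cdot>\<^sub>v (cmat A *\<^sub>v c 2)" unfolding cBc[OF cc] M2 using cA cc by (simp add: mult_mat_vec)
  have h3: "cmat B *\<^sub>v c 3 = cnj z \<cdot>\<^sub>v (cmat A *\<^sub>v c 3) + cmat A *\<^sub>v c 2" unfolding cBc[OF cc] M3
    using cA cc by (simp add: mult_mat_vec mult_add_distrib_mat_vec[OF cA])
  have zz: "z \<noteq> cnj z" using Imz by (metis cnj.simps(2) neg_equal_zero)
  note orth = chain_orth[OF A B Asym Bsym zz cc cc cc cc h0 h1 h2 h3]
  have anz: "c 0 \<bullet> (cmat A *\<^sub>v c 1) \<noteq> 0"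
  proof
    assume a0: "c 0 \<bullet> (cmat A *\<^sub>v c 1) = 0"
    define y where "y = cmat A *\<^sub>v c 0"
    have y: "y \<in> carrier_vec 4" unfolding y_def using cA cc by simp
    note sA = bil_sym[OF cA cmat_sym[OF A Asym]]
    have cy: "c k \<bullet> y = 0" if "k < 4" for k
    proof -
      have "c k \<bullet> y = c 0 \<bullet> (cmat A *\<^sub>v c k)" unfolding y_def using sA cc by auto
      moreover have "k = 0 \<or> k = 1 \<or> k = 2 \<or> k = 3" using that by auto
      ultimately show ?thesis using orth a0 by auto
    qed
    have PTy: "transpose_mat P *\<^sub>v y = 0\<^sub>v 4"
      using cy P y by (intro eq_vecI) (auto simp: c_def)
    have "y = (transpose_mat (P * Q)) *\<^sub>v y" unfolding PQ using y by simp
    also have "\<dots> = transpose_mat Q *\<^sub>v (transpose_mat P *\<^sub>v y)"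
      using P Q y by (simp add: transpose_mult[OF P Q])
    also have "\<dots> = 0\<^sub>v 4" unfolding PTy using Q by (intro eq_vecI) (auto simp: scalar_prod_def)
    finally have y0: "y = 0\<^sub>v 4" .
    from invA A obtain Ai where Ai: "Ai \<in> carrier_mat 4 4" "Ai * A = 1\<^sub>m 4"
      unfolding invertible_mat_def inverts_mat_def square_mat.simps
      by (metis carrier_matD(1) carrier_matD(2) carrier_matI index_mult_mat(2) index_mult_mat(3) index_one_mat(2) index_one_mat(3))
    have one: "cmat (1\<^sub>m 4) = (1\<^sub>m 4 :: complex mat)" by (intro eq_matI) auto
    have "cmat Ai * cmat A = cmat (Ai * A)" by (rule of_real_hom.mat_hom_mult[OF Ai(1) A, symmetric])
    also have "\<dots> = 1\<^sub>m 4" unfolding Ai(2) one ..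
    finally have "cmat Ai * cmat A = 1\<^sub>m 4" .
    hence "c 0 = cmat Ai *\<^sub>v y" unfolding y_def using Ai cA cc
      by (metis assoc_mult_mat_vec map_carrier_mat one_mult_mat_vec)
    hence c00: "c 0 = 0\<^sub>v 4" unfolding y0 using Ai by (auto intro!: eq_vecI simp: scalar_prod_def)
    have "(Q * P) $$ (0, 0) = row Q 0 \<bullet> c 0" unfolding c_def using Q P by simp
    also have "\<dots> = 0" unfolding c00 using Q by (simp add: scalar_prod_def)
    finally show False unfolding QP by simp
  qed
  have "pencil4 A B z (c 0) (c 1)"
    by (unfold_locales) (fact A B Asym Bsym Imz cc h0 h1 anz)+
  thus ?thesis by blast
qed


lemma sym_entry: "A \<in> carrier_mat n n \<Longrightarrow> transpose_mat A = A \<Longrightarrow> i < n \<Longrightarrow> j < n \<Longrightarrow> A $$ (j, i) = A $$ (i, j)"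
  by (metis carrier_matD(1) carrier_matD(2) index_transpose_mat(1))

theorem theorem10:
  fixes A B :: "real mat" and z :: complex
  assumes "A \<in> carrier_mat 4 4" and "B \<in> carrier_mat 4 4"
    and "transpose_mat A = A" and "transpose_mat B = B"
    and "pencil_poly A B \<noteq> 0"
    and "Im z \<noteq> 0"
    and "\<exists>c. c \<noteq> 0 \<and> map_poly complex_of_real (pencil_poly A B)
            = Polynomial.smult c ([:- z, 1:]^2 * [:- cnj z, 1:]^2)"
    and "segre_22 A B z"
  shows "(\<forall>l::real. poly (pencil_poly A B) l \<noteq> 0) \<and> (\<forall>l::real. Id_idx A B l = 2) \<and>
         (\<exists>L C. real_line L \<and> space_cubic C \<and> qsic A B = L \<union> C \<and>
                (\<forall>X \<in> L \<inter> C. \<not> is_real_vec X))"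
proof -
  note A = assms(1) and B = assms(2) and Asym = assms(3) and Bsym = assms(4) and Imz = assms(6)
  obtain b0 b1 where pc: "pencil4 A B z b0 b1" using segre_pencil[OF A B Asym Bsym Imz assms(8)] by blast
  interpret pencil4 A B z b0 b1 by (rule pc)
  have P1: "poly (pencil_poly A B) l \<noteq> 0" for l :: real
  proof
    assume h: "poly (pencil_poly A B) l = 0"
    from assms(7) obtain c where c: "c \<noteq> 0"
      and eq: "map_poly complex_of_real (pencil_poly A B) = Polynomial.smult c ([:- z, 1:]^2 * [:- cnj z, 1:]^2)" by blast
    have "complex_of_real (poly (pencil_poly A B) l) = poly (map_poly complex_of_real (pencil_poly A B)) (of_real l)"
      by simp
    also have "\<dots> = c * ((of_real l - z)^2 * (of_real l - cnj z)^2)" unfolding eq by simp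
    finally have "c * ((of_real l - z)^2 * (of_real l - cnj z)^2) = 0" using h by simp
    moreover have "complex_of_real l - z \<noteq> 0"
    proof
      assume "complex_of_real l - z = 0"
      hence "z = of_real l" by simp
      with Imz show False by simp
    qed
    moreover have "complex_of_real l - cnj z \<noteq> 0"
    proof
      assume "complex_of_real l - cnj z = 0"
      hence "cnj z = of_real l" by simp
      hence "Im (cnj z) = 0" by simp
      with Imz show False by simp
    qed
    ultimately show False using c by simp
  qed
  have P2: "Id_idx A B l = 2" for l :: real
  proof -
    let ?S = "l \<cdot>\<^sub>m A - B"
    have S: "?S \<in> carrier_mat 4 4" by (rule minus_carrier_mat[OF B])
    have Ssym: "transpose_mat ?S = ?S"
      by (rule eq_matI) (use A B sym_entry[OF A Asym] sym_entry[OF B Bsym] in auto)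
    obtain u1 u2 where u: "u1 \<in> carrier_vec 4" "u2 \<in> carrier_vec 4"
      and uv: "\<And>e1 e2. (e1 \<cdot>\<^sub>v u1 + e2 \<cdot>\<^sub>v u2) \<bullet> (?S *\<^sub>v (e1 \<cdot>\<^sub>v u1 + e2 \<cdot>\<^sub>v u2)) = 2 * 1 * (e1^2 + e2^2)"
      using eps_vectors[of l 1] by blast
    obtain w1 w2 where w: "w1 \<in> carrier_vec 4" "w2 \<in> carrier_vec 4"
      and wv: "\<And>e1 e2. (e1 \<cdot>\<^sub>v w1 + e2 \<cdot>\<^sub>v w2) \<bullet> (?S *\<^sub>v (e1 \<cdot>\<^sub>v w1 + e2 \<cdot>\<^sub>v w2)) = 2 * (-1) * (e1^2 + e2^2)"
      using eps_vectors[of l "-1"] by blast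
    have pos: "e1^2 + e2^2 > 0" if "(e1, e2) \<noteq> (0::real, 0::real)" for e1 e2
      using that by (simp add: sum_power2_gt_zero_iff)
    have "num_pos_eig ?S = 2"
    proof (rule signature_2[OF S Ssym u w])
      fix e1 e2 :: real assume h: "(e1, e2) \<noteq> (0, 0)"
      show "(e1 \<cdot>\<^sub>v u1 + e2 \<cdot>\<^sub>v u2) \<bullet> (?S *\<^sub>v (e1 \<cdot>\<^sub>v u1 + e2 \<cdot>\<^sub>v u2)) > 0"
        unfolding uv using pos[OF h] by simp
    next
      fix e1 e2 :: real assume h: "(e1, e2) \<noteq> (0, 0)"
      show "(e1 \<cdot>\<^sub>v w1 + e2 \<cdot>\<^sub>v w2) \<bullet> (?S *\<^sub>v (e1 \<cdot>\<^sub>v w1 + e2 \<cdot>\<^sub>v w2)) < 0"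
        unfolding wv using pos[OF h] by simp
    qed
    thus ?thesis unfolding Id_idx_def .
  qed
  have P3: "\<exists>L C. real_line L \<and> space_cubic C \<and> qsic A B = L \<union> C \<and> (\<forall>X \<in> L \<inter> C. \<not> is_real_vec X)"
    using real_line_L space_cubic_C qsic_eq no_real_int by blast
  show ?thesis using P1 P2 P3 by blast
qed


end
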